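(* Let $(\mathbf{a}_1,\dots,\mathbf{a}_n)$ be symmetric second-order tensors on $\mathbb{R}^3$. Then: (1) the family is isotropic iff $\mathbf{a}_k'=0$ for all $1\le k\le n$; (2) it is transversely isotropic iff there exists $j$ with $\mathbf{a}_j'\neq0$, $\mathbf{a}_j\times\mathbf{a}_j^2=0$ and $\mathbf{a}_j\times\mathbf{a}_k=0$ for all $1\le k\le n$; (3) it is orthotropic iff $\operatorname{tr}(\mathbf{a}_k\times\mathbf{a}_l)=0$ for all $1\le k,l\le n$, and either there exists $j$ with $\mathbf{a}_j\times\mathbf{a}_j^2\neq0$ or there exists a pair $(i,j)$ with $\mathbf{a}_i\times\mathbf{a}_j\neq0$; (4) it is monoclinic iff there exists a pair $(i,j)$ such that $\boldsymbol{\omega}:=\operatorname{tr}(\mathbf{a}_i\times\mathbf{a}_j)\neq0$ and $(\mathbf{a}_k\boldsymbol{\omega})\times\boldsymbol{\omega}=0$ for all $1\le k\le n$.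
   Context: $SO(3)$ acts on tensors by $(g\star\mathbf{T})(x_1,\dots,x_m)=\mathbf{T}(g^{-1}x_1,\dots,g^{-1}x_m)$. Symmetry group of a family: intersection of $\{g: g\star\mathbf{a}_k=\mathbf{a}_k\}$; symmetry class: its conjugacy class in $SO(3)$. Isotropic $=[SO(3)]$, transversely isotropic $=[O(2)]$, orthotropic $=[\mathbb{D}_2]$, monoclinic $=[\mathbb{Z}_2]$ ($O(2)$: rotations about the $z$-axis together with the rotation by $\pi$ about the $x$-axis; $\mathbb{D}_2$: identity and rotations by $\pi$ about the coordinate axes; $\mathbb{Z}_2$: identity and a rotation by $\pi$). $\mathbf{a}'=\mathbf{a}-\frac13\operatorname{tr}(\mathbf{a})\mathbf{q}$ ($\mathbf{q}$ the identity tensor), $\mathbf{a}^2$ the matrix square, $\mathbf{a}_k\boldsymbol{\omega}$ matrix-vector product. For totally symmetric tensors $\mathbf{S}^1$ of order $p$ and $\mathbf{S}^2$ of order $q$ (vectors being order 1), $\mathbf{S}^1\times\mathbf{S}^2$ is the order $p+q-1$ totally symmetric tensor obtained by totally symmetrizing $\varepsilon_{i_1jk}S^1_{ji_2\cdots i_p}S^2_{ki_{p+1}\cdots i_{p+q-1}}$ ($\varepsilon$ Levi-Civita); for vectors it is the usual cross product. $\operatorname{tr}$ of a totally symmetric tensor is the contraction of two of its indices. *)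

theory Defs
  imports "HOL-Analysis.Analysis" "HOL-Analysis.Cross3"
begin

type_synonym tensor2 = "real^3^3"
type_synonym tensor3 = "real^3^3^3"

text \<open>SO(3) and its action on second-order tensors:
  (g * a)(x,y) = a(g^-1 x, g^-1 y), i.e. g a g^T.\<close>

definition SO3 :: "tensor2 set" where
  "SO3 = {g. rotation_matrix g}"

definition act2 :: "tensor2 \<Rightarrow> tensor2 \<Rightarrow> tensor2" where
  "act2 g a = g ** a ** transpose g"

definition symgroup :: "(nat \<Rightarrow> tensor2) \<Rightarrow> nat \<Rightarrow> tensor2 set" where
  "symgroup a n = {g \<in> SO3. \<forall>k\<in>{1..n}. act2 g (a k) = a k}"

definition conj_SO3 :: "tensor2 set \<Rightarrow> tensor2 set \<Rightarrow> bool" where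
  "conj_SO3 G H \<longleftrightarrow> (\<exists>h\<in>SO3. G = (\<lambda>g. h ** g ** transpose h) ` H)"

definition diag3 :: "real \<Rightarrow> real \<Rightarrow> real \<Rightarrow> tensor2" where
  "diag3 x y z = (\<chi> i j. if i = j then (if i = 1 then x else if i = 2 then y else z) else 0)"

definition rotz :: "real \<Rightarrow> tensor2" where
  "rotz t = (\<chi> i j.
     if i = 1 \<and> j = 1 then cos t else
     if i = 1 \<and> j = 2 then - sin t else
     if i = 2 \<and> j = 1 then sin t else
     if i = 2 \<and> j = 2 then cos t else
     if i = 3 \<and> j = 3 then 1 else 0)"

text \<open>O(2): rotations about z together with the rotation by pi about x.\<close>
definition O2 :: "tensor2 set" where
  "O2 = {rotz t | t. True} \<union> {rotz t ** diag3 1 (-1) (-1) | t. True}"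

definition D2 :: "tensor2 set" where
  "D2 = {mat 1, diag3 1 (-1) (-1), diag3 (-1) 1 (-1), diag3 (-1) (-1) 1}"

definition Z2 :: "tensor2 set" where
  "Z2 = {mat 1, diag3 (-1) (-1) 1}"

definition isotropic :: "(nat \<Rightarrow> tensor2) \<Rightarrow> nat \<Rightarrow> bool" where
  "isotropic a n \<longleftrightarrow> conj_SO3 (symgroup a n) SO3"
definition transversely_isotropic :: "(nat \<Rightarrow> tensor2) \<Rightarrow> nat \<Rightarrow> bool" where
  "transversely_isotropic a n \<longleftrightarrow> conj_SO3 (symgroup a n) O2"
definition orthotropic :: "(nat \<Rightarrow> tensor2) \<Rightarrow> nat \<Rightarrow> bool" where
  "orthotropic a n \<longleftrightarrow> conj_SO3 (symgroup a n) D2"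
definition monoclinic :: "(nat \<Rightarrow> tensor2) \<Rightarrow> nat \<Rightarrow> bool" where
  "monoclinic a n \<longleftrightarrow> conj_SO3 (symgroup a n) Z2"

definition dev :: "tensor2 \<Rightarrow> tensor2" where
  "dev a = a - (trace a / 3) *\<^sub>R mat 1"

definition levi :: "3 \<Rightarrow> 3 \<Rightarrow> 3 \<Rightarrow> real" where
  "levi i j k =
    (if (i, j, k) \<in> {(1,2,3), (2,3,1), (3,1,2)} then 1
     else if (i, j, k) \<in> {(1,3,2), (3,2,1), (2,1,3)} then -1 else 0)"

definition tcross :: "tensor2 \<Rightarrow> tensor2 \<Rightarrow> tensor3" where
  "tcross a b = (let f = (\<lambda>i1 i2 i3. \<Sum>j\<in>UNIV. \<Sum>k\<in>UNIV. levi i1 j k * a$j$i2 * b$k$i3) in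
     (\<chi> i1 i2 i3. (f i1 i2 i3 + f i1 i3 i2 + f i2 i1 i3 + f i2 i3 i1 + f i3 i1 i2 + f i3 i2 i1) / 6))"

definition ttr :: "tensor3 \<Rightarrow> real^3" where
  "ttr T = (\<chi> i. \<Sum>j\<in>UNIV. T$i$j$j)"

end

theory Submission
  imports Defs
begin


lemma levi_simps[simp]:
  "levi 1 2 3 = 1" "levi 2 3 1 = 1" "levi 3 1 2 = 1"
  "levi 1 3 2 = -1" "levi 3 2 1 = -1" "levi 2 1 3 = -1"
  "levi 1 1 x = 0" "levi 2 2 x = 0" "levi 3 3 x = 0"
  "levi 1 x 1 = 0" "levi 2 x 2 = 0" "levi 3 x 3 = 0"
  "levi x 1 1 = 0" "levi x 2 2 = 0" "levi x 3 3 = 0"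
  by (simp_all add: levi_def)

lemma symE: "transpose b = b \<Longrightarrow> b$i$j = b$j$i"
  by (metis transpose_def vec_lambda_beta)

lemma p2: "(\<Sum>i\<in>A. \<Sum>j\<in>A. \<Sum>k\<in>A. g i k j) = (\<Sum>i\<in>A. \<Sum>j\<in>A. \<Sum>k\<in>A. (g i j k::real))"
  by (rule sum.cong[OF refl], rule sum.swap)
lemma p3: "(\<Sum>i\<in>A. \<Sum>j\<in>A. \<Sum>k\<in>A. g j i k) = (\<Sum>i\<in>A. \<Sum>j\<in>A. \<Sum>k\<in>A. (g i j k::real))"
  by (rule sum.swap)
lemma p4: "(\<Sum>i\<in>A. \<Sum>j\<in>A. \<Sum>k\<in>A. g j k i) = (\<Sum>i\<in>A. \<Sum>j\<in>A. \<Sum>k\<in>A. (g i j k::real))"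
  by (metis p2 p3)
lemma p5: "(\<Sum>i\<in>A. \<Sum>j\<in>A. \<Sum>k\<in>A. g k i j) = (\<Sum>i\<in>A. \<Sum>j\<in>A. \<Sum>k\<in>A. (g i j k::real))"
  by (metis p2 p3)
lemma p6: "(\<Sum>i\<in>A. \<Sum>j\<in>A. \<Sum>k\<in>A. g k j i) = (\<Sum>i\<in>A. \<Sum>j\<in>A. \<Sum>k\<in>A. (g i j k::real))"
  by (metis p2 p3)

definition FF :: "real^3^3 \<Rightarrow> real^3^3 \<Rightarrow> 3 \<Rightarrow> 3 \<Rightarrow> 3 \<Rightarrow> real" where
  "FF a b i1 i2 i3 = (\<Sum>j\<in>UNIV. \<Sum>k\<in>UNIV. levi i1 j k * a$j$i2 * b$k$i3)"

lemma tcross_FF: "tcross a b $ i $ j $ k = (FF a b i j k + FF a b i k j + FF a b j i k + FF a b j k i + FF a b k i j + FF a b k j i) / 6"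
  unfolding tcross_def Let_def FF_def by simp

definition cubic :: "real^3^3^3 \<Rightarrow> real^3 \<Rightarrow> real" where
  "cubic T x = (\<Sum>i\<in>UNIV. \<Sum>j\<in>UNIV. \<Sum>k\<in>UNIV. T$i$j$k * (x$i * x$j * x$k))"

lemma cubic_tcross_aux:
  "cubic (tcross a b) x = (\<Sum>i\<in>UNIV. \<Sum>j\<in>UNIV. \<Sum>k\<in>UNIV. FF a b i j k * (x$i * x$j * x$k))"
proof -
  let ?G = "\<lambda>i j k. FF a b i j k * (x$i * x$j * x$k)"
  have "6 * cubic (tcross a b) x = (\<Sum>i\<in>UNIV. \<Sum>j\<in>UNIV. \<Sum>k\<in>UNIV. ?G i j k + ?G i k j + ?G j i k + ?G j k i + ?G k i j + ?G k j i)"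
    unfolding cubic_def tcross_FF sum_distrib_left by (intro sum.cong refl) (simp add: algebra_simps)
  also have "\<dots> = (\<Sum>i\<in>UNIV. \<Sum>j\<in>UNIV. \<Sum>k\<in>UNIV. ?G i j k) + (\<Sum>i\<in>UNIV. \<Sum>j\<in>UNIV. \<Sum>k\<in>UNIV. ?G i k j)
     + (\<Sum>i\<in>UNIV. \<Sum>j\<in>UNIV. \<Sum>k\<in>UNIV. ?G j i k) + (\<Sum>i\<in>UNIV. \<Sum>j\<in>UNIV. \<Sum>k\<in>UNIV. ?G j k i)
     + (\<Sum>i\<in>UNIV. \<Sum>j\<in>UNIV. \<Sum>k\<in>UNIV. ?G k i j) + (\<Sum>i\<in>UNIV. \<Sum>j\<in>UNIV. \<Sum>k\<in>UNIV. ?G k j i)"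
    by (simp only: sum.distrib)
  also have "\<dots> = 6 * (\<Sum>i\<in>UNIV. \<Sum>j\<in>UNIV. \<Sum>k\<in>UNIV. ?G i j k)"
    unfolding p2[where g="?G"] p3[where g="?G"] p4[where g="?G"] p5[where g="?G"] p6[where g="?G"]
    by simp
  finally show ?thesis by simp
qed

lemma cubic_tcross:
  fixes a b :: "real^3^3"
  shows "cubic (tcross a b) x = x \<bullet> cross3 (a *v x) (b *v x)"
  unfolding cubic_tcross_aux FF_def
  by (simp add: sum_3 cross3_def inner_vec_def matrix_vector_mult_def algebra_simps)
lemma cubic_zero:
  fixes T :: "real^3^3^3"
  assumes s1: "\<And>i j k. T$i$j$k = T$j$i$k" and s2: "\<And>i j k. T$i$j$k = T$i$k$j"
    and z: "\<And>x. cubic T x = 0"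
  shows "T = 0"
proof -
  have r: "T$1$2$1 = T$1$1$2" "T$1$3$1 = T$1$1$3" "T$1$3$2 = T$1$2$3" "T$2$1$1 = T$1$1$2" "T$2$1$2 = T$1$2$2" "T$2$1$3 = T$1$2$3" "T$2$2$1 = T$1$2$2" "T$2$3$1 = T$1$2$3" "T$2$3$2 = T$2$2$3" "T$3$1$1 = T$1$1$3" "T$3$1$2 = T$1$2$3" "T$3$1$3 = T$1$3$3" "T$3$2$1 = T$1$2$3" "T$3$2$2 = T$2$2$3" "T$3$2$3 = T$2$3$3" "T$3$3$1 = T$1$3$3" "T$3$3$2 = T$2$3$3"
    by (metis s1 s2)+
  have c: "cubic T x = T$1$1$1 * x$1^3 + T$2$2$2 * x$2^3 + T$3$3$3 * x$3^3
     + 3 * T$1$1$2 * x$1^2 * x$2 + 3 * T$1$1$3 * x$1^2 * x$3 + 3 * T$1$2$2 * x$1 * x$2^2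
     + 3 * T$1$3$3 * x$1 * x$3^2 + 3 * T$2$2$3 * x$2^2 * x$3 + 3 * T$2$3$3 * x$2 * x$3^2
     + 6 * T$1$2$3 * x$1 * x$2 * x$3" for x
    unfolding cubic_def by (simp add: sum_3 r power2_eq_square power3_eq_cube algebra_simps)
  have e: "cubic T (vector [a,b,c]) = 0" for a b c using z by blast
  note E = e[unfolded c vector_3]
  have 1: "T$1$1$1 = 0" "T$2$2$2 = 0" "T$3$3$3 = 0"
    using E[of 1 0 0] E[of 0 1 0] E[of 0 0 1] by simp_all
  have 2: "T$1$1$2 = 0" "T$1$2$2 = 0" using E[of 1 1 0] E[of 1 "-1" 0] 1 by simp_all
  have 3: "T$1$1$3 = 0" "T$1$3$3 = 0" using E[of 1 0 1] E[of 1 0 "-1"] 1 by simp_all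
  have 4: "T$2$2$3 = 0" "T$2$3$3 = 0" using E[of 0 1 1] E[of 0 1 "-1"] 1 by simp_all
  have 5: "T$1$2$3 = 0" using E[of 1 1 1] 1 2 3 4 by simp
  show ?thesis
    by (simp add: vec_eq_iff forall_3 r 1 2 3 4 5)
qed

lemma tcross_sym1: "tcross a b $i$j$k = tcross a b $j$i$k" by (simp add: tcross_FF add_ac)
lemma tcross_sym2: "tcross a b $i$j$k = tcross a b $i$k$j" by (simp add: tcross_FF add_ac)

lemma tcross_zero_iff: "tcross a b = 0 \<longleftrightarrow> (\<forall>x. x \<bullet> cross3 (a *v x) (b *v x) = 0)"
proof
  assume "tcross a b = 0"
  then have "cubic (tcross a b) x = 0" for x by (simp add: cubic_def)
  then show "\<forall>x. x \<bullet> cross3 (a *v x) (b *v x) = 0"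
    by (simp add: cubic_tcross)
next
  assume "\<forall>x. x \<bullet> cross3 (a *v x) (b *v x) = 0"
  then show "tcross a b = 0"
    by (intro cubic_zero tcross_sym1 tcross_sym2) (simp add: cubic_tcross)
qed

lemma ttr1:
  fixes a b :: "real^3^3"
  assumes "transpose a = a" "transpose b = b"
  shows "ttr (tcross a b) $ 1 = ((a ** b)$2$3 - (a ** b)$3$2) / 3"
  unfolding ttr_def tcross_def Let_def
  apply (simp add: sum_3 matrix_matrix_mult_def)
  apply (simp add: symE[OF assms(1), of 1 2] symE[OF assms(1), of 1 3] symE[OF assms(1), of 2 3]
   symE[OF assms(2), of 1 2] symE[OF assms(2), of 1 3] symE[OF assms(2), of 2 3] algebra_simps)
  apply (simp add: field_simps)
  done

lemma ttr2:
  fixes a b :: "real^3^3"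
  assumes "transpose a = a" "transpose b = b"
  shows "ttr (tcross a b) $ 2 = ((a ** b)$3$1 - (a ** b)$1$3) / 3"
  unfolding ttr_def tcross_def Let_def
  apply (simp add: sum_3 matrix_matrix_mult_def)
  apply (simp add: symE[OF assms(1), of 1 2] symE[OF assms(1), of 1 3] symE[OF assms(1), of 2 3]
   symE[OF assms(2), of 1 2] symE[OF assms(2), of 1 3] symE[OF assms(2), of 2 3] algebra_simps)
  apply (simp add: field_simps)
  done

lemma ttr3:
  fixes a b :: "real^3^3"
  assumes "transpose a = a" "transpose b = b"
  shows "ttr (tcross a b) $ 3 = ((a ** b)$1$2 - (a ** b)$2$1) / 3"
  unfolding ttr_def tcross_def Let_def
  apply (simp add: sum_3 matrix_matrix_mult_def)
  apply (simp add: symE[OF assms(1), of 1 2] symE[OF assms(1), of 1 3] symE[OF assms(1), of 2 3]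
   symE[OF assms(2), of 1 2] symE[OF assms(2), of 1 3] symE[OF assms(2), of 2 3] algebra_simps)
  apply (simp add: field_simps)
  done

lemma ttr_cross:
  fixes a b :: "real^3^3"
  assumes sa: "transpose a = a" and sb: "transpose b = b"
  shows "cross3 (ttr (tcross a b)) x = (-(1/3)) *\<^sub>R ((a ** b - b ** a) *v x)"
proof -
  have t: "(b ** a) $ i $ j = (a ** b) $ j $ i" for i j
  proof -
    have "b ** a = transpose (a ** b)" by (simp add: matrix_transpose_mul sa sb)
    then show ?thesis by (simp add: transpose_def)
  qed
  have e: "(a ** b - b ** a) *v x = (\<chi> i. \<Sum>j\<in>UNIV. ((a ** b) $ i $ j - (a ** b) $ j $ i) * x $ j)"
    by (simp add: matrix_vector_mult_def t vec_eq_iff left_diff_distrib)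
  show ?thesis
    unfolding e vec_eq_iff forall_3
    apply (simp add: cross3_def ttr1[OF sa sb] ttr2[OF sa sb] ttr3[OF sa sb] sum_3 algebra_simps)
    apply (simp add: field_simps)
    done
qed

lemma cross_all_zero: "(\<And>x. cross3 w x = 0) \<Longrightarrow> w = 0"
proof -
  assume h: "\<And>x. cross3 w x = 0"
  have "cross3 w (axis 1 1) = 0" "cross3 w (axis 2 1) = 0" using h by auto
  then show "w = 0" by (simp add: cross3_def vec_eq_iff forall_3 axis_def)
qed

lemma ttr_zero_iff:
  fixes a b :: "real^3^3"
  assumes sa: "transpose a = a" and sb: "transpose b = b"
  shows "ttr (tcross a b) = 0 \<longleftrightarrow> a ** b = b ** a"
proof
  assume "ttr (tcross a b) = 0"
  then have "(a ** b - b ** a) *v x = 0" for x using ttr_cross[OF sa sb, of x] by simp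
  then have "(a ** b - b ** a) = 0" by (simp add: matrix_eq)
  then show "a ** b = b ** a" by simp
next
  assume "a ** b = b ** a"
  then show "ttr (tcross a b) = 0" using ttr_cross[OF sa sb] cross_all_zero by simp
qed


lemma rotD: assumes "rotation_matrix h"
  shows "transpose h ** h = mat 1" "h ** transpose h = mat 1" "det h = 1" "orthogonal_matrix h"
  using assms by (auto simp: rotation_matrix_def orthogonal_matrix_def)

lemma rot_transpose: "rotation_matrix h \<Longrightarrow> rotation_matrix (transpose h)"
  by (simp add: rotation_matrix_def det_transpose)

lemma rot_mul: fixes h g :: "real^3^3" shows "rotation_matrix h \<Longrightarrow> rotation_matrix g \<Longrightarrow> rotation_matrix (h ** g)"
  by (simp add: rotation_matrix_def det_mul orthogonal_matrix_mul)

lemma rot_id: "rotation_matrix (mat 1 :: real^3^3)"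
  by (simp add: rotation_matrix_def orthogonal_matrix_id)

lemma act2_comp: "act2 h (act2 g a) = act2 (h ** g) a"
  by (simp add: act2_def matrix_transpose_mul matrix_mul_assoc)

lemma act2_id[simp]: "act2 (mat 1) a = a"
  by (simp add: act2_def)

lemma act2_inv: assumes "rotation_matrix h"
  shows "act2 (transpose h) (act2 h a) = a" "act2 h (act2 (transpose h) a) = a"
  using rotD[OF assms] by (simp_all add: act2_comp)

lemma act2_inj: assumes "rotation_matrix h"
  shows "act2 h a = act2 h b \<longleftrightarrow> a = b"
  by (metis act2_inv(1) assms)

lemma act2_mul: assumes "rotation_matrix h"
  shows "act2 h (a ** b) = act2 h a ** act2 h b"
proof -
  have "act2 h a ** act2 h b = h ** a ** (transpose h ** h) ** b ** transpose h"
    by (simp add: act2_def matrix_mul_assoc)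
  then show ?thesis using rotD[OF assms] by (simp add: act2_def matrix_mul_assoc)
qed

lemma act2_scalar: assumes "rotation_matrix h"
  shows "act2 h (c *\<^sub>R mat 1) = c *\<^sub>R mat 1"
proof -
  have "h ** (c *\<^sub>R mat 1) ** transpose h = c *\<^sub>R (h ** transpose h)"
    by (simp add: matrix_scalar_ac scalar_matrix_assoc)
  then show ?thesis using rotD[OF assms] by (simp add: act2_def)
qed

lemma act2_transpose: "transpose (act2 h a) = act2 h (transpose a)"
  by (simp add: act2_def matrix_transpose_mul matrix_mul_assoc)

lemma act2_vec: assumes "rotation_matrix h"
  shows "act2 h a *v (h *v x) = h *v (a *v x)"
proof -
  have "act2 h a *v (h *v x) = h ** a ** (transpose h ** h) *v x"
    by (simp add: act2_def matrix_vector_mul_assoc matrix_mul_assoc del: transpose_matrix_vector)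
  then show ?thesis using rotD[OF assms] by (simp add: matrix_vector_mul_assoc del: transpose_matrix_vector)
qed

lemma rot_vec_inv: assumes "rotation_matrix h"
  shows "h *v (transpose h *v y) = y" "transpose h *v (h *v y) = y"
  using rotD[OF assms] by (simp_all add: matrix_vector_mul_assoc del: transpose_matrix_vector)

lemma rot_inner: fixes h :: "real^3^3" assumes "rotation_matrix h"
  shows "(h *v x) \<bullet> (h *v y) = x \<bullet> y"
proof -
  have e: "h *v x = x v* transpose h" using transpose_matrix_vector[of "transpose h" x] by simp
  have "(h *v x) \<bullet> (h *v y) = x \<bullet> (transpose h *v (h *v y))"
    unfolding e by (rule dot_lmul_matrix)
  also have "\<dots> = x \<bullet> y" using rot_vec_inv(2)[OF assms, of y] by (simp only:)
  finally show ?thesis .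
qed

lemma Q_act2: assumes "rotation_matrix h"
  shows "(h *v x) \<bullet> cross3 (act2 h a *v (h *v x)) (act2 h b *v (h *v x)) = x \<bullet> cross3 (a *v x) (b *v x)"
  using assms by (simp add: act2_vec cross_rotation_matrix rot_inner)

lemma tcross_act2: assumes "rotation_matrix h"
  shows "tcross (act2 h a) (act2 h b) = 0 \<longleftrightarrow> tcross a b = 0"
  unfolding tcross_zero_iff
proof
  assume H: "\<forall>x. x \<bullet> cross3 (act2 h a *v x) (act2 h b *v x) = 0"
  show "\<forall>x. x \<bullet> cross3 (a *v x) (b *v x) = 0"
  proof
    fix x show "x \<bullet> cross3 (a *v x) (b *v x) = 0" using H[rule_format, of "h *v x"] Q_act2[OF assms] by simp
  qed
next
  assume H: "\<forall>x. x \<bullet> cross3 (a *v x) (b *v x) = 0"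
  show "\<forall>x. x \<bullet> cross3 (act2 h a *v x) (act2 h b *v x) = 0"
  proof
    fix y
    have "y = h *v (transpose h *v y)" using rot_vec_inv[OF assms] by simp
    then show "y \<bullet> cross3 (act2 h a *v y) (act2 h b *v y) = 0"
      using H Q_act2[OF assms, of "transpose h *v y" a b] by metis
  qed
qed

lemma comm_act2: assumes "rotation_matrix h"
  shows "act2 h a ** act2 h b = act2 h b ** act2 h a \<longleftrightarrow> a ** b = b ** a"
  by (simp add: act2_mul[OF assms, symmetric] act2_inj[OF assms])

lemma trace_scalar: "trace (c *\<^sub>R mat 1 :: real^3^3) = 3 * c"
  by (simp add: trace_def sum_3 mat_def)

lemma dev_zero_iff: "dev a = 0 \<longleftrightarrow> (\<exists>c. a = c *\<^sub>R (mat 1 :: real^3^3))"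
proof
  assume "dev a = 0" then show "\<exists>c. a = c *\<^sub>R mat 1" unfolding dev_def by auto
next
  assume "\<exists>c. a = c *\<^sub>R mat 1"
  then obtain c where "a = c *\<^sub>R mat 1" by auto
  then show "dev a = 0" unfolding dev_def by (simp add: trace_scalar)
qed

lemma dev_act2: assumes "rotation_matrix h"
  shows "dev (act2 h a) = 0 \<longleftrightarrow> dev a = 0"
  unfolding dev_zero_iff by (metis act2_inv(1) act2_scalar assms)

lemma SO3_act2: assumes "rotation_matrix h" shows "act2 h g \<in> SO3 \<longleftrightarrow> g \<in> SO3"
  unfolding SO3_def act2_def
  by (metis (no_types, lifting) act2_def act2_inv(1) assms mem_Collect_eq rot_mul rot_transpose)

lemma symgroup_transport: assumes h: "rotation_matrix h"
  shows "symgroup a n = act2 h ` symgroup (\<lambda>k. act2 (transpose h) (a k)) n"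
proof -
  have key: "act2 (act2 h g') x = act2 h (act2 g' (act2 (transpose h) x))" for g' x
    by (simp add: act2_comp) (simp add: act2_def matrix_mul_assoc)
  show ?thesis
  proof (intro equalityI subsetI)
    fix g assume g: "g \<in> symgroup a n"
    let ?g' = "act2 (transpose h) g"
    have gg: "g = act2 h ?g'" using act2_inv[OF h] by simp
    have "?g' \<in> symgroup (\<lambda>k. act2 (transpose h) (a k)) n"
      unfolding symgroup_def
    proof (intro CollectI conjI ballI)
      show "?g' \<in> SO3" using g SO3_act2[OF rot_transpose[OF h]] unfolding symgroup_def by auto
      fix k assume k: "k \<in> {1..n}"
      have "act2 g (a k) = a k" using g k unfolding symgroup_def by auto
      then have "act2 h (act2 ?g' (act2 (transpose h) (a k))) = a k" using key gg by metis
      then show "act2 ?g' (act2 (transpose h) (a k)) = act2 (transpose h) (a k)"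
        by (metis act2_inv(1) h)
    qed
    then show "g \<in> act2 h ` symgroup (\<lambda>k. act2 (transpose h) (a k)) n" using gg by blast
  next
    fix g assume "g \<in> act2 h ` symgroup (\<lambda>k. act2 (transpose h) (a k)) n"
    then obtain g' where g': "g' \<in> symgroup (\<lambda>k. act2 (transpose h) (a k)) n" and gg: "g = act2 h g'" by auto
    show "g \<in> symgroup a n" unfolding symgroup_def
    proof (intro CollectI conjI ballI)
      show "g \<in> SO3" using g' gg SO3_act2[OF h] unfolding symgroup_def by auto
      fix k assume k: "k \<in> {1..n}"
      have "act2 g' (act2 (transpose h) (a k)) = act2 (transpose h) (a k)" using g' k unfolding symgroup_def by auto
      then show "act2 g (a k) = a k" using key gg act2_inv(2)[OF h] by metis
    qed
  qed
qed

lemma conj_SO3I: "rotation_matrix h \<Longrightarrow> G = act2 h ` X \<Longrightarrow> conj_SO3 G X"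
  unfolding conj_SO3_def SO3_def act2_def by auto


lemma sym_inner: fixes a :: "real^3^3" assumes "transpose a = a"
  shows "(a *v x) \<bullet> y = x \<bullet> (a *v y)"
proof -
  have "a *v x = x v* a" using transpose_matrix_vector[of a x] assms by simp
  then show ?thesis by (simp add: dot_lmul_matrix)
qed

lemma quad_nonpos_lin0:
  fixes c d :: real
  assumes "\<And>t. 2 * t * c + t^2 * d \<le> 0"
  shows "c = 0"
proof -
  define s where "s = 1 / (\<bar>d\<bar> + 1)"
  have s0: "s > 0" unfolding s_def by (simp add: add_pos_nonneg)
  have sd: "s * \<bar>d\<bar> < 1" unfolding s_def by (simp add: field_simps)
  have "2 * (s*c) * c + (s*c)^2 * d \<le> 0" using assms by blast
  then have "s * c^2 * (2 + s * d) \<le> 0" by (simp add: power2_eq_square algebra_simps)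
  moreover have "2 + s * d > 0" using sd s0
    by (smt (verit, best) abs_le_iff mult_left_mono abs_ge_self mult_minus_right)
  ultimately have "s * c^2 \<le> 0" by (simp add: mult_le_0_iff)
  then have "c^2 \<le> 0" using s0 by (simp add: mult_le_0_iff)
  then show ?thesis by simp
qed

lemma eigvec_exists:
  fixes a :: "real^3^3"
  assumes sa: "transpose a = a"
  shows "\<exists>u. norm u = 1 \<and> a *v u = (u \<bullet> (a *v u)) *\<^sub>R u"
proof -
  let ?f = "\<lambda>x. x \<bullet> (a *v x)"
  have cont: "continuous_on (sphere 0 1) ?f"
  proof -
    have "continuous_on (sphere 0 1) ((*v) a)"
      by (rule matrix_vector_mult_linear_continuous_on)
    then show ?thesis by (intro continuous_on_inner continuous_on_id)
  qed
  have cpt: "compact (sphere (0::real^3) 1)" by simp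
  have ne: "sphere (0::real^3) 1 \<noteq> {}" by simp
  obtain u where u: "u \<in> sphere 0 1" and umax: "\<forall>y\<in>sphere 0 1. ?f y \<le> ?f u"
    using continuous_attains_sup[OF cpt ne cont] by blast
  have nu: "norm u = 1" using u by simp
  have uu: "u \<bullet> u = 1" using nu by (simp add: dot_square_norm)
  define l where "l = ?f u"
  have bound: "?f x \<le> l * (x \<bullet> x)" for x
  proof (cases "x = 0")
    case True then show ?thesis by simp
  next
    case False
    define v where "v = (1 / norm x) *\<^sub>R x"
    have "v \<in> sphere 0 1" using False by (simp add: v_def)
    then have "?f v \<le> l" using umax l_def by auto
    moreover have "?f x = (norm x)^2 * ?f v"
    proof -
      have xv: "x = norm x *\<^sub>R v" using False by (simp add: v_def)
      have sc: "?f (c *\<^sub>R v) = c^2 * ?f v" for c by (simp add: matrix_vector_mult_scaleR power2_eq_square)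
      from xv have "?f x = ?f (norm x *\<^sub>R v)" by (rule arg_cong)
      then show ?thesis using sc by simp
    qed
    moreover have "x \<bullet> x = (norm x)^2" by (simp add: dot_square_norm)
    ultimately show ?thesis
      by (metis mult.commute mult_left_mono zero_le_power2)
  qed
  have orth: "v \<bullet> (a *v u) = l * (v \<bullet> u)" for v
  proof -
    have "2 * t * (v \<bullet> (a *v u) - l * (v \<bullet> u)) + t^2 * (?f v - l * (v \<bullet> v)) \<le> 0" for t
    proof -
      have h1: "?f (u + t *\<^sub>R v) \<le> l * ((u + t *\<^sub>R v) \<bullet> (u + t *\<^sub>R v))" by (rule bound)
      have h2: "?f (u + t *\<^sub>R v) = l + 2 * t * (v \<bullet> (a *v u)) + t^2 * ?f v"
      proof -
        have s: "u \<bullet> (a *v v) = v \<bullet> (a *v u)" by (metis sym_inner[OF sa] inner_commute)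
        show ?thesis by (simp add: s l_def inner_add_left inner_add_right matrix_vector_right_distrib
           matrix_vector_mult_scaleR power2_eq_square algebra_simps)
      qed
      have h3: "(u + t *\<^sub>R v) \<bullet> (u + t *\<^sub>R v) = 1 + 2 * t * (v \<bullet> u) + t^2 * (v \<bullet> v)"
        using uu by (simp add: inner_add_left inner_add_right power2_eq_square inner_commute algebra_simps)
      have "l + 2 * t * (v \<bullet> (a *v u)) + t^2 * ?f v \<le> l * (1 + 2 * t * (v \<bullet> u) + t^2 * (v \<bullet> v))"
        using h1 unfolding h2 h3 .
      then show ?thesis by (simp add: algebra_simps)
    qed
    then have "v \<bullet> (a *v u) - l * (v \<bullet> u) = 0" by (rule quad_nonpos_lin0)
    then show ?thesis by simp
  qed
  have "a *v u - l *\<^sub>R u = 0"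
  proof -
    let ?w = "a *v u - l *\<^sub>R u"
    have "?w \<bullet> ?w = ?w \<bullet> (a *v u) - l * (?w \<bullet> u)" by (simp add: inner_diff_right)
    also have "\<dots> = 0" using orth[of ?w] by simp
    finally show ?thesis by simp
  qed
  then show ?thesis using nu l_def by auto
qed


lemma mm_entry: "((A::real^3^3) ** B)$i$j = A$i$1*B$1$j + A$i$2*B$2$j + A$i$3*B$3$j"
  by (simp add: matrix_matrix_mult_def sum_3)
lemma mv_entry: "((A::real^3^3) *v x)$i = A$i$1*x$1 + A$i$2*x$2 + A$i$3*x$3"
  by (simp add: matrix_vector_mult_def sum_3)
lemma tr_entry: "transpose (A::real^3^3) $i$j = A$j$i"
  by (simp add: transpose_def)
lemma mat1_entry: "(mat 1 :: real^3^3) $i$j = (if i = j then 1 else 0)"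
  by (simp add: mat_def)
lemma mat3_eq: "(A::real^3^3) = B \<longleftrightarrow>
   A$1$1 = B$1$1 \<and> A$1$2 = B$1$2 \<and> A$1$3 = B$1$3 \<and>
   A$2$1 = B$2$1 \<and> A$2$2 = B$2$2 \<and> A$2$3 = B$2$3 \<and>
   A$3$1 = B$3$1 \<and> A$3$2 = B$3$2 \<and> A$3$3 = B$3$3"
  by (simp add: vec_eq_iff forall_3)

lemma rotz_entries[simp]:
  "rotz t $1$1 = cos t" "rotz t $1$2 = - sin t" "rotz t $1$3 = 0"
  "rotz t $2$1 = sin t" "rotz t $2$2 = cos t" "rotz t $2$3 = 0"
  "rotz t $3$1 = 0" "rotz t $3$2 = 0" "rotz t $3$3 = 1"
  by (simp_all add: rotz_def)

lemma diag3_entries[simp]: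
  "diag3 x y z $1$1 = x" "diag3 x y z $1$2 = 0" "diag3 x y z $1$3 = 0"
  "diag3 x y z $2$1 = 0" "diag3 x y z $2$2 = y" "diag3 x y z $2$3 = 0"
  "diag3 x y z $3$1 = 0" "diag3 x y z $3$2 = 0" "diag3 x y z $3$3 = z"
  by (simp_all add: diag3_def)

lemma mat1_entries[simp]:
  "(mat 1 :: real^3^3) $1$1 = 1" "(mat 1 :: real^3^3) $1$2 = 0" "(mat 1 :: real^3^3) $1$3 = 0"
  "(mat 1 :: real^3^3) $2$1 = 0" "(mat 1 :: real^3^3) $2$2 = 1" "(mat 1 :: real^3^3) $2$3 = 0"
  "(mat 1 :: real^3^3) $3$1 = 0" "(mat 1 :: real^3^3) $3$2 = 0" "(mat 1 :: real^3^3) $3$3 = 1"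
  by (simp_all add: mat_def)

lemma rot_by_entries:
  fixes g :: "real^3^3"
  assumes "transpose g ** g = mat 1" "det g = 1"
  shows "rotation_matrix g"
  using assms by (simp add: rotation_matrix_def orthogonal_matrix)

lemma rotz_rot: "rotation_matrix (rotz t)"
proof (rule rot_by_entries)
  show "transpose (rotz t) ** rotz t = mat 1"
    unfolding mat3_eq by (simp add: mm_entry tr_entry power2_eq_square[symmetric])
  show "det (rotz t) = 1"
    by (simp add: det_3 power2_eq_square[symmetric])
qed

lemma diag3_rot: "x*x = 1 \<Longrightarrow> y*y = 1 \<Longrightarrow> z*z = 1 \<Longrightarrow> x*y*z = 1 \<Longrightarrow> rotation_matrix (diag3 x y z)"
  by (rule rot_by_entries) (simp_all add: mat3_eq mm_entry tr_entry det_3)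

lemma angle_exists: "\<exists>t. cos t * sin t * (q - p) + r * ((cos t)^2 - (sin t)^2) = (0::real)"
proof (cases "p = q \<and> r = 0")
  case True then show ?thesis by (intro exI[of _ 0]) simp
next
  case False
  define N where "N = sqrt (((p-q)/2)^2 + r^2)"
  have pos: "((p-q)/2)^2 + r^2 > 0" using False by (auto simp: add_pos_nonneg add_nonneg_pos)
  then have N0: "N > 0" unfolding N_def by simp
  have NN: "N^2 = ((p-q)/2)^2 + r^2" unfolding N_def using pos by simp
  have "((p-q)/(2*N))^2 + (r/N)^2 = (((p-q)/2)/N)^2 + (r/N)^2" by simp
  also have "\<dots> = (((p-q)/2)^2 + r^2) / N^2" by (simp add: power_divide add_divide_distrib)
  also have "\<dots> = 1" using NN N0 pos False by (simp del: power_divide)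
  finally have "((p-q)/(2*N))^2 + (r/N)^2 = 1" .
  then obtain th where th: "(p-q)/(2*N) = cos th" "r/N = sin th" by (metis sincos_total_2pi)
  have c2: "cos th = (cos (th/2))^2 - (sin (th/2))^2" using cos_double[of "th/2"] by simp
  have s2: "sin th = 2 * sin (th/2) * cos (th/2)" using sin_double[of "th/2"] by simp
  have "cos (th/2) * sin (th/2) * (q - p) + r * ((cos (th/2))^2 - (sin (th/2))^2)
      = sin th / 2 * (q - p) + r * cos th" using c2 s2 by simp
  also have "\<dots> = r/N/2 * (q - p) + r * ((p-q)/(2*N))" using th by simp
  also have "\<dots> = 0" using N0 by (simp add: field_simps)
  finally show ?thesis by blast
qed

lemma symE3: assumes "transpose (b::real^3^3) = b"
  shows "b$2$1 = b$1$2" "b$3$1 = b$1$3" "b$3$2 = b$2$3"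
  using symE[OF assms] by auto

lemma block_rotz:
  fixes b :: "real^3^3"
  assumes sb: "transpose b = b" and b13: "b$1$3 = 0" and b23: "b$2$3 = 0"
  obtains t where "act2 (transpose (rotz t)) b = diag3 ((act2 (transpose (rotz t)) b)$1$1) ((act2 (transpose (rotz t)) b)$2$2) (b$3$3)"
proof -
  obtain t where t: "cos t * sin t * (b$2$2 - b$1$1) + b$1$2 * ((cos t)^2 - (sin t)^2) = 0"
    using angle_exists by blast
  have "act2 (transpose (rotz t)) b = diag3 ((act2 (transpose (rotz t)) b)$1$1) ((act2 (transpose (rotz t)) b)$2$2) (b$3$3)"
    unfolding mat3_eq using t
    by (simp add: act2_def mm_entry tr_entry symE3[OF sb] b13 b23 power2_eq_square algebra_simps)
  then show ?thesis using that by blast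
qed

lemma axis3_entries[simp]: "(axis 3 1 :: real^3) $ 1 = 0" "(axis 3 1 :: real^3) $ 2 = 0" "(axis 3 1 :: real^3) $ 3 = 1"
  by (simp_all add: axis_def)

lemma eig_block:
  fixes a h :: "real^3^3"
  assumes h: "rotation_matrix h" and hu: "h *v axis 3 1 = u" and au: "a *v u = l *\<^sub>R u"
  shows "(act2 (transpose h) a)$1$3 = 0" "(act2 (transpose h) a)$2$3 = 0" "(act2 (transpose h) a)$3$3 = l"
proof -
  have "act2 (transpose h) a *v axis 3 1 = transpose h *v (a *v (h *v axis 3 1))"
    by (simp add: act2_def matrix_vector_mul_assoc matrix_mul_assoc del: transpose_matrix_vector)
  also have "\<dots> = l *\<^sub>R (transpose h *v (h *v axis 3 1))"
    using hu au by (simp add: matrix_vector_mult_scaleR del: transpose_matrix_vector)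
  also have "\<dots> = l *\<^sub>R axis 3 1" using rot_vec_inv(2)[OF h] by simp
  finally have e: "act2 (transpose h) a *v axis 3 1 = l *\<^sub>R axis 3 1" .
  have "(act2 (transpose h) a *v axis 3 1) $ i = (act2 (transpose h) a)$i$3" for i
    by (simp add: mv_entry)
  then show "(act2 (transpose h) a)$1$3 = 0" "(act2 (transpose h) a)$2$3 = 0" "(act2 (transpose h) a)$3$3 = l"
    using e by (metis axis3_entries scaleR_zero_right vector_scaleR_component mult_1_right real_scaleR_def)+
qed

lemma diagonalize:
  fixes a :: "real^3^3"
  assumes sa: "transpose a = a"
  obtains h d1 d2 d3 where "rotation_matrix h" "act2 (transpose h) a = diag3 d1 d2 d3"
proof -
  obtain u where nu: "norm u = 1" and au: "a *v u = (u \<bullet> (a *v u)) *\<^sub>R u"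
    using eigvec_exists[OF sa] by blast
  obtain h1 where h1: "rotation_matrix h1" "h1 *v axis 3 1 = u"
    using rotation_matrix_exists_basis[of u 3] nu by auto
  define b where "b = act2 (transpose h1) a"
  have sb: "transpose b = b" unfolding b_def by (simp add: act2_transpose sa)
  have b13: "b$1$3 = 0" and b23: "b$2$3 = 0" unfolding b_def using eig_block[OF h1 au] by auto
  obtain t where t: "act2 (transpose (rotz t)) b = diag3 ((act2 (transpose (rotz t)) b)$1$1) ((act2 (transpose (rotz t)) b)$2$2) (b$3$3)"
    using block_rotz[OF sb b13 b23] by blast
  have "act2 (transpose (h1 ** rotz t)) a = act2 (transpose (rotz t)) b"
    unfolding b_def by (simp add: act2_comp matrix_transpose_mul)
  then show ?thesis using that[OF rot_mul[OF h1(1) rotz_rot]] t by metis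
qed


lemma SO3_rot: "g \<in> SO3 \<longleftrightarrow> rotation_matrix g" by (simp add: SO3_def)

lemma fix_iff_comm: assumes g: "rotation_matrix g"
  shows "act2 g x = x \<longleftrightarrow> g ** x = x ** g"
proof
  assume e: "act2 g x = x"
  have "act2 g x ** g = g ** x ** (transpose g ** g)" by (simp add: act2_def matrix_mul_assoc)
  then have "act2 g x ** g = g ** x" using rotD[OF g] by simp
  then show "g ** x = x ** g" using e by simp
next
  assume e: "g ** x = x ** g"
  have "act2 g x = x ** (g ** transpose g)" unfolding act2_def using e by (simp add: matrix_mul_assoc)
  then show "act2 g x = x" using rotD[OF g] by simp
qed

lemma rot_eqs:
  fixes g :: "real^3^3"
  assumes g: "rotation_matrix g"
  shows "g$1$1*g$1$1 + g$2$1*g$2$1 + g$3$1*g$3$1 = 1"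
    "g$1$2*g$1$2 + g$2$2*g$2$2 + g$3$2*g$3$2 = 1"
    "g$1$3*g$1$3 + g$2$3*g$2$3 + g$3$3*g$3$3 = 1"
    "g$1$1*g$1$2 + g$2$1*g$2$2 + g$3$1*g$3$2 = 0"
    "g$1$1*g$1$3 + g$2$1*g$2$3 + g$3$1*g$3$3 = 0"
    "g$1$2*g$1$3 + g$2$2*g$2$3 + g$3$2*g$3$3 = 0"
    "det g = 1"
proof -
  have "transpose g ** g = mat 1" using rotD[OF g] by simp
  then have "(transpose g ** g)$i$j = (mat 1 :: real^3^3)$i$j" for i j by simp
  note E = this[unfolded mm_entry tr_entry]
  show "g$1$1*g$1$1 + g$2$1*g$2$1 + g$3$1*g$3$1 = 1" using E[of 1 1] by simp
  show "g$1$2*g$1$2 + g$2$2*g$2$2 + g$3$2*g$3$2 = 1" using E[of 2 2] by simp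
  show "g$1$3*g$1$3 + g$2$3*g$2$3 + g$3$3*g$3$3 = 1" using E[of 3 3] by simp
  show "g$1$1*g$1$2 + g$2$1*g$2$2 + g$3$1*g$3$2 = 0" using E[of 1 2] by simp
  show "g$1$1*g$1$3 + g$2$1*g$2$3 + g$3$1*g$3$3 = 0" using E[of 1 3] by simp
  show "g$1$2*g$1$3 + g$2$2*g$2$3 + g$3$2*g$3$3 = 0" using E[of 2 3] by simp
  show "det g = 1" using rotD[OF g] by simp
qed

lemma flipx_eq: "rotz t ** diag3 1 (-1) (-1) = (\<chi> i j.
     if i = 1 \<and> j = 1 then cos t else if i = 1 \<and> j = 2 then sin t else
     if i = 2 \<and> j = 1 then sin t else if i = 2 \<and> j = 2 then - cos t else
     if i = 3 \<and> j = 3 then -1 else 0)"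
  unfolding mat3_eq by (simp add: mm_entry)

lemma O2_elem:
  assumes "g \<in> O2"
  shows "rotation_matrix g \<and> g$1$3 = 0 \<and> g$2$3 = 0 \<and> g$3$1 = 0 \<and> g$3$2 = 0"
proof -
  from assms consider t where "g = rotz t" | t where "g = rotz t ** diag3 1 (-1) (-1)"
    unfolding O2_def by blast
  then show ?thesis
  proof cases
    case 1 then show ?thesis using rotz_rot by simp
  next
    case 2
    have "rotation_matrix (diag3 1 (-1) (-1))" by (rule diag3_rot) simp_all
    then have "rotation_matrix g" using 2 rot_mul rotz_rot by blast
    then show ?thesis using 2 by (simp add: mm_entry)
  qed
qed

lemma O2_char:
  fixes g :: "real^3^3"
  assumes g: "rotation_matrix g" and z: "g$1$3 = 0" "g$2$3 = 0" "g$3$1 = 0" "g$3$2 = 0"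
  shows "g \<in> O2"
proof -
  note E = rot_eqs[OF g, unfolded z]
  let ?x = "g$1$1" and ?y = "g$2$1" and ?u = "g$1$2" and ?v = "g$2$2" and ?e = "g$3$3"
  have xy: "?x^2 + ?y^2 = 1" using E(1) by (simp add: power2_eq_square)
  have uv: "?u*?u + ?v*?v = 1" using E(2) by simp
  have ee: "?e * ?e = 1" using E(3) by simp
  have o: "?x*?u + ?y*?v = 0" using E(4) by simp
  have d: "?e * (?x*?v - ?u*?y) = 1" using E(7) unfolding det_3 z by (simp add: algebra_simps)
  obtain t where t: "?x = cos t" "?y = sin t" using sincos_total_2pi[OF xy] by metis
  from ee have "?e = 1 \<or> ?e = -1" by (metis minus_equation_iff mult_cancel_left1 mult_minus_left square_eq_1_iff)
  then show ?thesis
  proof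
    assume e1: "?e = 1"
    have "(?u + ?y)^2 + (?v - ?x)^2 = 0"
      using xy uv o d e1 by (simp add: power2_eq_square algebra_simps)
    then have "?u = - ?y" "?v = ?x" by (simp_all add: sum_power2_eq_zero_iff)
    then have "g = rotz t" unfolding mat3_eq using t z e1 by simp
    then show ?thesis unfolding O2_def by blast
  next
    assume e1: "?e = -1"
    have "(?u - ?y)^2 + (?v + ?x)^2 = 0"
      using xy uv o d e1 by (simp add: power2_eq_square algebra_simps)
    then have "?u = ?y" "?v = - ?x" by (simp_all add: sum_power2_eq_zero_iff)
    then have "g = rotz t ** diag3 1 (-1) (-1)" unfolding flipx_eq mat3_eq using t z e1 by simp
    then show ?thesis unfolding O2_def by blast
  qed
qed

lemma symgroup_O2:
  assumes all: "\<forall>k\<in>{1..n}. \<exists>p q. b k = diag3 p p q"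
    and j: "j \<in> {1..n}" "b j = diag3 p0 p0 q0" "p0 \<noteq> q0"
  shows "symgroup b n = O2"
proof (intro equalityI subsetI)
  fix g assume "g \<in> symgroup b n"
  then have g: "rotation_matrix g" and fx: "act2 g (b j) = b j"
    using j(1) unfolding symgroup_def SO3_rot by blast+
  then have "g ** b j = b j ** g" using fix_iff_comm by blast
  then have c: "g ** diag3 p0 p0 q0 = diag3 p0 p0 q0 ** g" using j by simp
  have "g$1$3 * q0 = p0 * g$1$3" "g$2$3 * q0 = p0 * g$2$3" "g$3$1 * p0 = q0 * g$3$1" "g$3$2 * p0 = q0 * g$3$2"
    using c unfolding mat3_eq by (simp_all add: mm_entry)
  then have "g$1$3 = 0" "g$2$3 = 0" "g$3$1 = 0" "g$3$2 = 0" using j(3)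
    by (metis mult.commute mult_cancel_left)+
  then show "g \<in> O2" using O2_char g by blast
next
  fix g assume gO: "g \<in> O2"
  note ge = O2_elem[OF gO]
  show "g \<in> symgroup b n" unfolding symgroup_def SO3_rot
  proof (intro CollectI conjI ballI)
    show "rotation_matrix g" using ge by simp
    fix k assume k: "k \<in> {1..n}"
    then obtain p q where bk: "b k = diag3 p p q" using all by blast
    have "g ** b k = b k ** g" unfolding bk mat3_eq using ge by (simp add: mm_entry)
    then show "act2 g (b k) = b k" using fix_iff_comm ge by blast
  qed
qed

definition D2list where "D2list = [diag3 1 1 1, diag3 1 (-1) (-1), diag3 (-1) 1 (-1), diag3 (-1) (-1) 1]"

lemma mat1_diag: "(mat 1 :: real^3^3) = diag3 1 1 1" unfolding mat3_eq by simp

lemma D2_alt: "D2 = {diag3 1 1 1, diag3 1 (-1) (-1), diag3 (-1) 1 (-1), diag3 (-1) (-1) 1}"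
  unfolding D2_def mat1_diag ..

lemma Z2_alt: "Z2 = {diag3 1 1 1, diag3 (-1) (-1) 1}"
  unfolding Z2_def mat1_diag ..

lemma sq1: "(x::real) * x = 1 \<Longrightarrow> x = 1 \<or> x = -1"
  by (metis minus_equation_iff mult_cancel_left1 mult_minus_left square_eq_1_iff)

lemma symgroup_D2:
  assumes all: "\<forall>k\<in>{1..n}. \<exists>x y z. b k = diag3 x y z"
    and s12: "\<exists>k\<in>{1..n}. (b k)$1$1 \<noteq> (b k)$2$2"
    and s13: "\<exists>k\<in>{1..n}. (b k)$1$1 \<noteq> (b k)$3$3"
    and s23: "\<exists>k\<in>{1..n}. (b k)$2$2 \<noteq> (b k)$3$3"
  shows "symgroup b n = D2"
proof (intro equalityI subsetI)
  fix g assume gs: "g \<in> symgroup b n"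
  then have g: "rotation_matrix g" unfolding symgroup_def SO3_rot by auto
  have cm: "g ** b k = b k ** g" if "k \<in> {1..n}" for k
    using gs that fix_iff_comm[OF g] unfolding symgroup_def by auto
  have off: "g$i$j * (b k)$j$j = (b k)$i$i * g$i$j" if kk: "k \<in> {1..n}" and ij: "i \<noteq> j" for k i j
  proof -
    obtain x y z where bk: "b k = diag3 x y z" using all kk by blast
    have "(g ** b k)$i$j = (b k ** g)$i$j" using cm[OF kk] by simp
    then show ?thesis unfolding bk using ij exhaust_3[of i] exhaust_3[of j]
      by (auto simp: mm_entry)
  qed
  obtain k1 where k1: "k1 \<in> {1..n}" "(b k1)$1$1 \<noteq> (b k1)$2$2" using s12 by blast
  obtain k2 where k2: "k2 \<in> {1..n}" "(b k2)$1$1 \<noteq> (b k2)$3$3" using s13 by blast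
  obtain k3 where k3: "k3 \<in> {1..n}" "(b k3)$2$2 \<noteq> (b k3)$3$3" using s23 by blast
  have z: "g$1$2 = 0" "g$2$1 = 0" "g$1$3 = 0" "g$3$1 = 0" "g$2$3 = 0" "g$3$2 = 0"
    using off[OF k1(1), of 1 2] off[OF k1(1), of 2 1] off[OF k2(1), of 1 3] off[OF k2(1), of 3 1]
      off[OF k3(1), of 2 3] off[OF k3(1), of 3 2] k1(2) k2(2) k3(2)
    by (simp_all add: mult.commute)
  note E = rot_eqs[OF g, unfolded z]
  have a: "g$1$1 * g$1$1 = 1" "g$2$2 * g$2$2 = 1" "g$3$3 * g$3$3 = 1" using E by simp_all
  have d: "g$1$1 * g$2$2 * g$3$3 = 1" using E(7) unfolding det_3 z by simp
  have gd: "g = diag3 (g$1$1) (g$2$2) (g$3$3)" unfolding mat3_eq using z by simp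
  from sq1[OF a(1)] sq1[OF a(2)] sq1[OF a(3)] d
  show "g \<in> D2" unfolding D2_alt by (subst gd) auto
next
  fix g assume "g \<in> D2"
  then obtain x y z where gd: "g = diag3 x y z" "x*x = 1" "y*y = 1" "z*z = 1" "x*y*z = 1"
    unfolding D2_alt by auto
  have g: "rotation_matrix g" using gd diag3_rot by simp
  show "g \<in> symgroup b n" unfolding symgroup_def SO3_rot
  proof (intro CollectI conjI ballI)
    show "rotation_matrix g" by (rule g)
    fix k assume k: "k \<in> {1..n}"
    then obtain p q r where bk: "b k = diag3 p q r" using all by blast
    have "g ** b k = b k ** g" unfolding bk gd(1) mat3_eq by (simp add: mm_entry)
    then show "act2 g (b k) = b k" using fix_iff_comm g by blast
  qed
qed

lemma mm_diff_l: "(A::real^3^3) ** (B - C) = A ** B - A ** C"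
  by (simp add: matrix_matrix_mult_def vec_eq_iff sum_subtractf algebra_simps)
lemma mm_diff_r: "((B::real^3^3) - C) ** A = B ** A - C ** A"
  by (simp add: matrix_matrix_mult_def vec_eq_iff sum_subtractf algebra_simps)

lemma comm_sub: "g ** P = P ** g \<Longrightarrow> g ** Q = Q ** g \<Longrightarrow> g ** (P ** Q - Q ** P) = (P ** Q - Q ** P) ** (g::real^3^3)"
proof -
  assume a: "g ** P = P ** g" "g ** Q = Q ** g"
  have 1: "g ** (P ** Q) = P ** Q ** g" by (metis a matrix_mul_assoc)
  have 2: "g ** (Q ** P) = Q ** P ** g" by (metis a matrix_mul_assoc)
  show ?thesis by (simp add: mm_diff_l mm_diff_r 1 2)
qed

lemma symgroup_Z2:
  assumes blk: "\<forall>k\<in>{1..n}. transpose (b k) = b k \<and> (b k)$1$3 = 0 \<and> (b k)$2$3 = 0"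
    and nc: "i \<in> {1..n}" "j \<in> {1..n}" "b i ** b j \<noteq> b j ** b i"
  shows "symgroup b n = Z2"
proof (intro equalityI subsetI)
  fix g assume gs: "g \<in> symgroup b n"
  then have g: "rotation_matrix g" unfolding symgroup_def SO3_rot by auto
  have cm: "g ** b k = b k ** g" if "k \<in> {1..n}" for k
    using gs that fix_iff_comm[OF g] unfolding symgroup_def by auto
  have bz: "(b k)$1$3 = 0" "(b k)$2$3 = 0" "(b k)$3$1 = 0" "(b k)$3$2 = 0" "(b k)$2$1 = (b k)$1$2"
    if "k \<in> {1..n}" for k
    using blk that symE3[of "b k"] by auto
  let ?P = "b i" and ?Q = "b j"
  define W where "W = ?P ** ?Q - ?Q ** ?P"
  define w where "w = W$1$2"
  note bzi = bz[OF nc(1)] and bzj = bz[OF nc(2)]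
  have W: "W$1$1 = 0" "W$1$2 = w" "W$1$3 = 0" "W$2$1 = -w" "W$2$2 = 0" "W$2$3 = 0"
     "W$3$1 = 0" "W$3$2 = 0" "W$3$3 = 0"
    unfolding w_def W_def by (simp_all add: mm_entry bzi bzj algebra_simps)
  have w0: "w \<noteq> 0"
  proof
    assume "w = 0"
    then have "W = 0" unfolding mat3_eq using W by simp
    then show False using nc(3) unfolding W_def by simp
  qed
  have gW: "g ** W = W ** g" unfolding W_def using comm_sub[OF cm[OF nc(1)] cm[OF nc(2)]] .
  then have "(g ** W)$p$q = (W ** g)$p$q" for p q by simp
  note GW = this[unfolded mm_entry]
  have z4: "g$2$3 = 0" "g$1$3 = 0" "g$3$2 = 0" "g$3$1 = 0"
    using GW[of 1 3] GW[of 2 3] GW[of 3 1] GW[of 3 2] w0 by (auto simp: W)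
  have "w * (g$1$2 + g$2$1) = 0" using GW[of 1 1] z4 by (simp add: W algebra_simps)
  then have z5: "g$1$2 = - g$2$1" using w0 by (simp add: add_eq_0_iff)
  have "w * (g$2$2 - g$1$1) = 0" using GW[of 1 2] z4 by (simp add: W algebra_simps) metis
  then have z6: "g$2$2 = g$1$1" using w0 by simp
  note z = z4 z5 z6
  note E = rot_eqs[OF g, unfolded z]
  have cs: "g$1$1 * g$1$1 + g$2$1 * g$2$1 = 1" using E(1) by simp
  have "g$3$3 * (g$1$1 * g$1$1 + g$2$1 * g$2$1) = 1" using E(7) unfolding det_3 z by (simp add: algebra_simps)
  then have e1: "g$3$3 = 1" using cs by simp
  have s0: "g$2$1 = 0"
  proof (rule ccontr)
    assume s: "g$2$1 \<noteq> 0"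
    have sc: "(b k)$1$1 = (b k)$2$2 \<and> (b k)$1$2 = 0" if k: "k \<in> {1..n}" for k
    proof -
      have c12: "(g ** b k)$1$2 = (b k ** g)$1$2" and c11: "(g ** b k)$1$1 = (b k ** g)$1$1"
        using cm[OF k] by simp_all
      have "g$2$1 * ((b k)$1$1 - (b k)$2$2) = 0"
        using c12 by (simp add: mm_entry z bz[OF k] algebra_simps)
      moreover have "g$2$1 * (b k)$1$2 = 0"
        using c11 by (simp add: mm_entry z bz[OF k] algebra_simps)
      ultimately have "g$2$1 * ((b k)$1$1 - (b k)$2$2) = 0 \<and> g$2$1 * (b k)$1$2 = 0" by simp
      then show ?thesis using s by simp
    qed
    have "?P ** ?Q = ?Q ** ?P" unfolding mat3_eq using sc[OF nc(1)] sc[OF nc(2)]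
      by (simp add: mm_entry bzi bzj)
    then show False using nc(3) by simp
  qed
  have "g$1$1 * g$1$1 = 1" using cs s0 by simp
  then have "g$1$1 = 1 \<or> g$1$1 = -1" by (rule sq1)
  moreover have "g = diag3 (g$1$1) (g$1$1) 1" unfolding mat3_eq using z s0 e1 by simp
  ultimately show "g \<in> Z2" unfolding Z2_alt by auto
next
  fix g assume "g \<in> Z2"
  then obtain e where gd: "g = diag3 e e 1" "e * e = 1" unfolding Z2_alt by auto
  have g: "rotation_matrix g" using gd diag3_rot by simp
  show "g \<in> symgroup b n" unfolding symgroup_def SO3_rot
  proof (intro CollectI conjI ballI)
    show "rotation_matrix g" by (rule g)
    fix k assume k: "k \<in> {1..n}"
    have bz: "(b k)$1$3 = 0" "(b k)$2$3 = 0" "(b k)$3$1 = 0" "(b k)$3$2 = 0"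
      using blk k symE3[of "b k"] by auto
    have "g ** b k = b k ** g" unfolding gd(1) mat3_eq by (simp add: mm_entry bz)
    then show "act2 g (b k) = b k" using fix_iff_comm g by blast
  qed
qed


lemma conj_SO3D: "conj_SO3 G X \<Longrightarrow> \<exists>h. rotation_matrix h \<and> G = act2 h ` X"
  unfolding conj_SO3_def SO3_def act2_def by auto

lemma act2_SO3_img: assumes h: "rotation_matrix h" shows "act2 h ` SO3 = SO3"
proof (intro equalityI subsetI)
  fix g assume "g \<in> act2 h ` SO3" then show "g \<in> SO3" using SO3_act2[OF h] by auto
next
  fix g assume g: "g \<in> SO3"
  have "g = act2 h (act2 (transpose h) g)" using act2_inv[OF h] by simp
  moreover have "act2 (transpose h) g \<in> SO3" using g SO3_act2[OF rot_transpose[OF h]] by simp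
  ultimately show "g \<in> act2 h ` SO3" by blast
qed

lemma act2_img_inv: assumes h: "rotation_matrix h" shows "act2 (transpose h) ` (act2 h ` X) = X"
  using act2_inv(1)[OF h] by (simp add: image_image)

lemma act2_sq: assumes h: "rotation_matrix h"
  shows "act2 h g ** act2 h g = mat 1 \<longleftrightarrow> g ** g = mat 1"
proof -
  have m: "act2 h (mat 1) = mat 1" using act2_scalar[OF h, of 1] by simp
  show ?thesis using act2_mul[OF h, of g g] act2_inj[OF h, of "g ** g" "mat 1"] m by simp
qed

lemma conj_inv:
  assumes "conj_SO3 G X"
  shows "(G = SO3 \<longleftrightarrow> X = SO3) \<and> ((\<exists>g\<in>G. g ** g \<noteq> mat 1) \<longleftrightarrow> (\<exists>g\<in>X. g ** g \<noteq> mat 1)) \<and> card G = card X"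
proof -
  obtain h where h: "rotation_matrix h" and G: "G = act2 h ` X" using conj_SO3D[OF assms] by blast
  have 1: "G = SO3 \<longleftrightarrow> X = SO3"
  proof
    assume "G = SO3"
    then have "act2 (transpose h) ` G = SO3" using act2_SO3_img[OF rot_transpose[OF h]] by simp
    then show "X = SO3" using act2_img_inv[OF h] G by simp
  next
    assume "X = SO3" then show "G = SO3" using G act2_SO3_img[OF h] by simp
  qed
  have 2: "(\<exists>g\<in>G. g ** g \<noteq> mat 1) \<longleftrightarrow> (\<exists>g\<in>X. g ** g \<noteq> mat 1)"
    using G act2_sq[OF h] by auto
  have "inj_on (act2 h) X" using act2_inj[OF h] by (simp add: inj_on_def)
  then have 3: "card G = card X" using G by (simp add: card_image)
  show ?thesis using 1 2 3 by blast
qed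

definition Rx :: "real^3^3" where
  "Rx = (\<chi> i j. if i = 1 \<and> j = 1 then 1 else if i = 2 \<and> j = 3 then -1 else if i = 3 \<and> j = 2 then 1 else 0)"

lemma Rx_entries[simp]:
  "Rx$1$1 = 1" "Rx$1$2 = 0" "Rx$1$3 = 0" "Rx$2$1 = 0" "Rx$2$2 = 0" "Rx$2$3 = -1"
  "Rx$3$1 = 0" "Rx$3$2 = 1" "Rx$3$3 = 0"
  by (simp_all add: Rx_def)

lemma Rx_rot: "rotation_matrix Rx"
  by (rule rot_by_entries) (simp_all add: mat3_eq mm_entry tr_entry det_3)

lemma Rx_sq: "Rx ** Rx \<noteq> mat 1"
  unfolding mat3_eq by (simp add: mm_entry)

lemma O2_ne_SO3: "O2 \<noteq> SO3"
proof
  assume "O2 = SO3"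
  then have "Rx \<in> O2" using Rx_rot SO3_rot by simp
  then show False using O2_elem by fastforce
qed

lemma SO3_sq: "\<exists>g\<in>SO3. g ** g \<noteq> mat 1" using Rx_rot Rx_sq SO3_rot by blast

lemma O2_sq: "\<exists>g\<in>O2. g ** g \<noteq> mat 1"
proof
  show "rotz (pi/2) \<in> O2" unfolding O2_def by blast
  show "rotz (pi/2) ** rotz (pi/2) \<noteq> mat 1" unfolding mat3_eq by (simp add: mm_entry)
qed

lemma diag_sq: "x*x = 1 \<Longrightarrow> y*y = 1 \<Longrightarrow> z*z = 1 \<Longrightarrow> diag3 x y z ** diag3 x y z = mat 1"
  unfolding mat3_eq by (simp add: mm_entry)

lemma D2_sq: "\<not> (\<exists>g\<in>D2. g ** g \<noteq> mat 1)" unfolding D2_alt using diag_sq by auto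
lemma Z2_sq: "\<not> (\<exists>g\<in>Z2. g ** g \<noteq> mat 1)" unfolding Z2_alt using diag_sq by auto
lemma I_sq: "\<not> (\<exists>g\<in>{mat 1 :: real^3^3}. g ** g \<noteq> mat 1)" by simp

lemma diag3_eq: "diag3 x y z = diag3 x' y' z' \<longleftrightarrow> x = x' \<and> y = y' \<and> z = z'"
  unfolding mat3_eq by simp

lemma card_D2: "card D2 = 4" unfolding D2_alt by (simp add: diag3_eq)
lemma card_Z2: "card Z2 = 2" unfolding Z2_alt by (simp add: diag3_eq)

lemma SO3_ne: "D2 \<noteq> SO3" "Z2 \<noteq> SO3" "{mat 1} \<noteq> SO3"
  using SO3_sq D2_sq Z2_sq I_sq by metis+

lemma classes_distinct:
  assumes "conj_SO3 G X" "conj_SO3 G Y"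
    and "X \<in> {SO3, O2, D2, Z2, {mat 1}}" "Y \<in> {SO3, O2, D2, Z2, {mat 1}}"
  shows "X = Y"
proof -
  note a = conj_inv[OF assms(1)] conj_inv[OF assms(2)]
  have e1: "X = SO3 \<longleftrightarrow> Y = SO3" and e2: "(\<exists>g\<in>X. g ** g \<noteq> mat 1) \<longleftrightarrow> (\<exists>g\<in>Y. g ** g \<noteq> mat 1)"
    and e3: "card X = card Y" using a by auto
  have c1: "card {mat 1 :: real^3^3} = 1" by simp
  from assms(3) show ?thesis
  proof (elim insertE emptyE)
    assume x: "X = SO3"
    then have "Y = SO3" using e1 by simp
    then show ?thesis using x by simp
  next
    assume x: "X = O2"
    then have y1: "Y \<noteq> SO3" using e1 O2_ne_SO3 by simp
    have y2: "\<exists>g\<in>Y. g ** g \<noteq> mat 1" using e2 x O2_sq by simp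
    from assms(4) show ?thesis
      by (elim insertE emptyE) (use x y1 y2 D2_sq Z2_sq I_sq in simp_all)
  next
    assume x: "X = D2"
    then have y1: "Y \<noteq> SO3" using e1 SO3_ne by simp
    have y2: "\<not> (\<exists>g\<in>Y. g ** g \<noteq> mat 1)" using e2 x D2_sq by simp
    have y3: "card Y = 4" using e3 x card_D2 by simp
    from assms(4) show ?thesis
      by (elim insertE emptyE) (use x y1 y2 y3 O2_sq card_Z2 c1 in simp_all)
  next
    assume x: "X = Z2"
    then have y1: "Y \<noteq> SO3" using e1 SO3_ne by simp
    have y2: "\<not> (\<exists>g\<in>Y. g ** g \<noteq> mat 1)" using e2 x Z2_sq by simp
    have y3: "card Y = 2" using e3 x card_Z2 by simp
    from assms(4) show ?thesis
      by (elim insertE emptyE) (use x y1 y2 y3 O2_sq card_D2 c1 in simp_all)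
  next
    assume x: "X = {mat 1}"
    then have y1: "Y \<noteq> SO3" using e1 SO3_ne by simp
    have y2: "\<not> (\<exists>g\<in>Y. g ** g \<noteq> mat 1)" using e2 x I_sq by simp
    have y3: "card Y = 1" using e3 x c1 by simp
    from assms(4) show ?thesis
      by (elim insertE emptyE) (use x y1 y2 y3 O2_sq card_D2 card_Z2 in simp_all)
  qed
qed

lemma conj_refl: "conj_SO3 X X"
  using conj_SO3I[OF rot_id, of X X] by simp


definition KK :: "real \<Rightarrow> real \<Rightarrow> real \<Rightarrow> real \<Rightarrow> real \<Rightarrow> real \<Rightarrow> real" where
  "KK d1 d2 d3 e1 e2 e3 = d2*e3 - d3*e2 + d3*e1 - d1*e3 + d1*e2 - d2*e1"

lemma Q_diag: "x \<bullet> cross3 (diag3 d1 d2 d3 *v x) (diag3 e1 e2 e3 *v x) = x$1 * x$2 * x$3 * KK d1 d2 d3 e1 e2 e3"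
  by (simp add: cross3_def inner_vec_def sum_3 mv_entry KK_def algebra_simps)

lemma tcross_diag: "tcross (diag3 d1 d2 d3) (diag3 e1 e2 e3) = 0 \<longleftrightarrow> KK d1 d2 d3 e1 e2 e3 = 0"
proof
  assume "tcross (diag3 d1 d2 d3) (diag3 e1 e2 e3) = 0"
  then have "vector [1,1,1] \<bullet> cross3 (diag3 d1 d2 d3 *v vector [1,1,1]) (diag3 e1 e2 e3 *v vector [1,1,1]) = 0"
    unfolding tcross_zero_iff by blast
  then show "KK d1 d2 d3 e1 e2 e3 = 0" unfolding Q_diag by simp
next
  assume "KK d1 d2 d3 e1 e2 e3 = 0"
  then show "tcross (diag3 d1 d2 d3) (diag3 e1 e2 e3) = 0" unfolding tcross_zero_iff Q_diag by simp
qed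

lemma diag_sq3: "diag3 d1 d2 d3 ** diag3 d1 d2 d3 = diag3 (d1*d1) (d2*d2) (d3*d3)"
  unfolding mat3_eq by (simp add: mm_entry)

lemma KK_vander: "KK d1 d2 d3 (d1*d1) (d2*d2) (d3*d3) = (d1 - d2) * (d2 - d3) * (d3 - d1)"
  by (simp add: KK_def algebra_simps)

lemma tcross_diag_sq: "tcross (diag3 d1 d2 d3) (diag3 d1 d2 d3 ** diag3 d1 d2 d3) = 0 \<longleftrightarrow> (d1 = d2 \<or> d2 = d3 \<or> d1 = d3)"
  unfolding diag_sq3 tcross_diag KK_vander by auto

lemma scalar_diag: "(\<exists>c. diag3 d1 d2 d3 = c *\<^sub>R mat 1) \<longleftrightarrow> d1 = d2 \<and> d2 = d3"
  unfolding mat3_eq by auto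

lemma tcross_scalar: "tcross (c *\<^sub>R mat 1) b = 0"
proof -
  have e: "(c *\<^sub>R mat 1 :: real^3^3) *v x = c *\<^sub>R x" for x by (simp add: vec_eq_iff mv_entry forall_3)
  show ?thesis unfolding tcross_zero_iff e by (simp add: cross_mult_left dot_cross_self)
qed

lemma tcross_aag: 
  fixes B :: "real^3^3"
  assumes sb: "transpose B = B" and ag: "al \<noteq> ga" and t: "tcross (diag3 al al ga) B = 0"
  shows "B = diag3 (B$1$1) (B$1$1) (B$3$3)"
proof -
  have Q: "x \<bullet> cross3 (diag3 al al ga *v x) (B *v x) = 0" for x using t unfolding tcross_zero_iff by blast
  note s = symE3[OF sb]
  have e1: "(ga - al) * (B$1$2 + B$1$3) = 0" using Q[of "vector [0,1,1]"]
    by (simp add: cross3_def inner_vec_def sum_3 mv_entry s algebra_simps)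
  have e2: "(ga - al) * (B$1$2 - B$1$3) = 0" using Q[of "vector [0,-1,1]"]
    by (simp add: cross3_def inner_vec_def sum_3 mv_entry s algebra_simps)
  have e3: "(ga - al) * (B$1$2 + B$2$3) = 0" using Q[of "vector [1,0,1]"]
    by (simp add: cross3_def inner_vec_def sum_3 mv_entry s algebra_simps)
  have e4: "(ga - al) * (B$1$1 + B$1$2 + B$1$3 - B$1$2 - B$2$2 - B$2$3) = 0" using Q[of "vector [1,1,1]"]
    by (simp add: cross3_def inner_vec_def sum_3 mv_entry s algebra_simps)
  have g: "ga - al \<noteq> 0" using ag by simp
  have "B$1$2 + B$1$3 = 0" "B$1$2 - B$1$3 = 0" "B$1$2 + B$2$3 = 0" "B$1$1 + B$1$2 + B$1$3 - B$1$2 - B$2$2 - B$2$3 = 0"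
    using e1 e2 e3 e4 g by simp_all
  then have z: "B$1$2 = 0" "B$1$3 = 0" "B$2$3 = 0" "B$2$2 = B$1$1" by linarith+
  show ?thesis unfolding mat3_eq using z s by simp
qed

lemma comm_aag:
  fixes B :: "real^3^3"
  assumes sb: "transpose B = B" and ag: "al \<noteq> ga" and c: "diag3 al al ga ** B = B ** diag3 al al ga"
  shows "B$1$3 = 0" "B$2$3 = 0"
proof -
  have "(diag3 al al ga ** B)$1$3 = (B ** diag3 al al ga)$1$3" "(diag3 al al ga ** B)$2$3 = (B ** diag3 al al ga)$2$3"
    using c by simp_all
  then have "(ga - al) * B$1$3 = 0" "(ga - al) * B$2$3 = 0"
    apply (simp_all add: mm_entry algebra_simps)
    apply metis+
    done
  then show "B$1$3 = 0" "B$2$3 = 0" using ag by simp_all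
qed

lemma comm_diag_distinct:
  fixes B :: "real^3^3"
  assumes d: "d1 \<noteq> d2" "d2 \<noteq> d3" "d1 \<noteq> d3" and c: "diag3 d1 d2 d3 ** B = B ** diag3 d1 d2 d3"
  shows "B = diag3 (B$1$1) (B$2$2) (B$3$3)"
proof -
  have "(diag3 d1 d2 d3 ** B)$i$j = (B ** diag3 d1 d2 d3)$i$j" for i j using c by simp
  note C = this[unfolded mm_entry]
  have "(d1 - d2) * B$1$2 = 0" "(d1 - d3) * B$1$3 = 0" "(d2 - d1) * B$2$1 = 0"
       "(d2 - d3) * B$2$3 = 0" "(d3 - d1) * B$3$1 = 0" "(d3 - d2) * B$3$2 = 0"
    using C[of 1 2] C[of 1 3] C[of 2 1] C[of 2 3] C[of 3 1] C[of 3 2] by (simp_all add: algebra_simps)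
  then show ?thesis unfolding mat3_eq using d by simp
qed

definition Pc :: "real^3^3" where
  "Pc = (\<chi> i j. if i = 1 \<and> j = 3 then 1 else if i = 2 \<and> j = 1 then 1 else if i = 3 \<and> j = 2 then 1 else 0)"

lemma Pc_entries[simp]:
  "Pc$1$1 = 0" "Pc$1$2 = 0" "Pc$1$3 = 1" "Pc$2$1 = 1" "Pc$2$2 = 0" "Pc$2$3 = 0"
  "Pc$3$1 = 0" "Pc$3$2 = 1" "Pc$3$3 = 0"
  by (simp_all add: Pc_def)

lemma Pc_rot: "rotation_matrix Pc"
  by (rule rot_by_entries) (simp_all add: mat3_eq mm_entry tr_entry det_3)

lemma Pc_act: "act2 (transpose Pc) (diag3 x y z) = diag3 y z x"
  unfolding mat3_eq by (simp add: act2_def mm_entry tr_entry)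

lemma normalize_rep:
  assumes rep: "d1 = d2 \<or> d2 = d3 \<or> d1 = d3" and ns: "\<not> (d1 = d2 \<and> d2 = d3)"
  shows "\<exists>P al ga. rotation_matrix P \<and> al \<noteq> ga \<and> act2 (transpose P) (diag3 d1 d2 d3) = diag3 al al ga"
proof -
  have PP: "rotation_matrix (Pc ** Pc)" using rot_mul Pc_rot by blast
  have PPa: "act2 (transpose (Pc ** Pc)) (diag3 x y z) = diag3 z x y" for x y z
    by (simp add: matrix_transpose_mul act2_comp[symmetric] Pc_act)
  from rep show ?thesis
  proof (elim disjE)
    assume "d1 = d2" then show ?thesis using ns rot_id by (intro exI[of _ "mat 1"] exI[of _ d1] exI[of _ d3]) auto
  next
    assume "d2 = d3" then show ?thesis using ns Pc_rot Pc_act by (intro exI[of _ Pc] exI[of _ d2] exI[of _ d1]) auto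
  next
    assume "d1 = d3" then show ?thesis using ns PP PPa by (intro exI[of _ "Pc ** Pc"] exI[of _ d1] exI[of _ d2]) auto
  qed
qed


lemma act2_rot_comp: "act2 (transpose (h ** P)) x = act2 (transpose P) (act2 (transpose h) x)"
  by (simp add: act2_comp matrix_transpose_mul)

lemma sym_act2: "transpose x = x \<Longrightarrow> transpose (act2 g x) = act2 g x"
  by (simp add: act2_transpose)

lemma aag_O2:
  assumes sym: "\<forall>k\<in>{1..n}. transpose (a k) = a k" and H: "rotation_matrix H" and j: "j \<in> {1..n}"
    and aj: "act2 (transpose H) (a j) = diag3 al al ga" and ag: "al \<noteq> ga"
    and tc: "\<forall>k\<in>{1..n}. tcross (a j) (a k) = 0"
  shows "conj_SO3 (symgroup a n) O2"
proof -
  let ?b = "\<lambda>k. act2 (transpose H) (a k)"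
  have HT: "rotation_matrix (transpose H)" using rot_transpose[OF H] .
  have all: "\<forall>k\<in>{1..n}. \<exists>p q. ?b k = diag3 p p q"
  proof
    fix k assume k: "k \<in> {1..n}"
    have sb: "transpose (?b k) = ?b k" using sym k sym_act2 by blast
    have "tcross (?b j) (?b k) = 0" using tc k tcross_act2[OF HT] by blast
    then have "tcross (diag3 al al ga) (?b k) = 0" using aj by simp
    then show "\<exists>p q. ?b k = diag3 p p q" using tcross_aag[OF sb ag] by blast
  qed
  have "symgroup ?b n = O2" by (rule symgroup_O2[OF all j aj ag])
  then have "symgroup a n = act2 H ` O2" using symgroup_transport[OF H, of a n] by simp
  then show ?thesis by (rule conj_SO3I[OF H])
qed

lemma C2_O2:
  assumes sym: "\<forall>k\<in>{1..n}. transpose (a k) = a k" and j: "j \<in> {1..n}"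
    and dv: "dev (a j) \<noteq> 0" and sq: "tcross (a j) (a j ** a j) = 0"
    and tc: "\<forall>k\<in>{1..n}. tcross (a j) (a k) = 0"
  shows "conj_SO3 (symgroup a n) O2"
proof -
  have sj: "transpose (a j) = a j" using sym j by blast
  obtain h d1 d2 d3 where h: "rotation_matrix h" and hd: "act2 (transpose h) (a j) = diag3 d1 d2 d3"
    using diagonalize[OF sj] by blast
  have HT: "rotation_matrix (transpose h)" using rot_transpose[OF h] .
  have "tcross (act2 (transpose h) (a j)) (act2 (transpose h) (a j ** a j)) = 0"
    using sq tcross_act2[OF HT] by blast
  then have "tcross (diag3 d1 d2 d3) (diag3 d1 d2 d3 ** diag3 d1 d2 d3) = 0"
    using hd act2_mul[OF HT] by simp
  then have rep: "d1 = d2 \<or> d2 = d3 \<or> d1 = d3" using tcross_diag_sq by blast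
  have ns: "\<not> (d1 = d2 \<and> d2 = d3)"
  proof
    assume "d1 = d2 \<and> d2 = d3"
    then have "dev (diag3 d1 d2 d3) = 0" unfolding dev_zero_iff scalar_diag by simp
    then have "dev (a j) = 0" using hd dev_act2[OF HT] by metis
    then show False using dv by simp
  qed
  obtain P al ga where P: "rotation_matrix P" and ag: "al \<noteq> ga"
      and Pd: "act2 (transpose P) (diag3 d1 d2 d3) = diag3 al al ga"
    using normalize_rep[OF rep ns] by blast
  have "act2 (transpose (h ** P)) (a j) = diag3 al al ga" using Pd hd act2_rot_comp by metis
  then show ?thesis using aag_O2[OF sym rot_mul[OF h P] j _ ag tc] by blast
qed

lemma KK_aag: "KK al al ga p q r = (ga - al) * (p - q)"
  by (simp add: KK_def algebra_simps)

lemma rotz_aag: "act2 (transpose (rotz t)) (diag3 al al ga) = diag3 al al ga"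
proof -
  have s: "sin t * sin t + cos t * cos t = 1" using sin_cos_squared_add[of t] by (simp add: power2_eq_square)
  have s2: "x * (cos t * cos t) + x * (sin t * sin t) = x" for x
    using s by (metis add.commute distrib_left mult.right_neutral)
  show ?thesis unfolding mat3_eq using s2 by (simp add: act2_def mm_entry tr_entry algebra_simps)
qed

lemma comm_pq:
  fixes B :: "real^3^3"
  assumes pq: "p \<noteq> q" and c: "diag3 p q r ** B = B ** diag3 p q r"
  shows "B$1$2 = 0" "B$2$1 = 0"
proof -
  have "(diag3 p q r ** B)$1$2 = (B ** diag3 p q r)$1$2" "(diag3 p q r ** B)$2$1 = (B ** diag3 p q r)$2$1"
    using c by simp_all
  then have "(p - q) * B$1$2 = 0" "(q - p) * B$2$1 = 0" by (simp_all add: mm_entry algebra_simps)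
  then show "B$1$2 = 0" "B$2$1 = 0" using pq by simp_all
qed

lemma C3_D2:
  assumes sym: "\<forall>k\<in>{1..n}. transpose (a k) = a k"
    and comm: "\<forall>k\<in>{1..n}. \<forall>l\<in>{1..n}. a k ** a l = a l ** a k"
    and nz: "(\<exists>j\<in>{1..n}. tcross (a j) (a j ** a j) \<noteq> 0) \<or> (\<exists>i\<in>{1..n}. \<exists>j\<in>{1..n}. tcross (a i) (a j) \<noteq> 0)"
  shows "conj_SO3 (symgroup a n) D2"
proof (cases "\<exists>j\<in>{1..n}. tcross (a j) (a j ** a j) \<noteq> 0")
  case True
  then obtain j where j: "j \<in> {1..n}" and sq: "tcross (a j) (a j ** a j) \<noteq> 0" by blast
  have sj: "transpose (a j) = a j" using sym j by blast
  obtain h d1 d2 d3 where h: "rotation_matrix h" and hd: "act2 (transpose h) (a j) = diag3 d1 d2 d3"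
    using diagonalize[OF sj] by blast
  have HT: "rotation_matrix (transpose h)" using rot_transpose[OF h] .
  let ?b = "\<lambda>k. act2 (transpose h) (a k)"
  have "tcross (act2 (transpose h) (a j)) (act2 (transpose h) (a j ** a j)) \<noteq> 0"
    using sq tcross_act2[OF HT] by blast
  then have "tcross (diag3 d1 d2 d3) (diag3 d1 d2 d3 ** diag3 d1 d2 d3) \<noteq> 0"
    using hd act2_mul[OF HT] by simp
  then have d: "d1 \<noteq> d2" "d2 \<noteq> d3" "d1 \<noteq> d3" using tcross_diag_sq by blast+
  have all: "\<forall>k\<in>{1..n}. \<exists>x y z. ?b k = diag3 x y z"
  proof
    fix k assume k: "k \<in> {1..n}"
    have "?b j ** ?b k = ?b k ** ?b j" using comm j k comm_act2[OF HT] by blast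
    then have "diag3 d1 d2 d3 ** ?b k = ?b k ** diag3 d1 d2 d3" using hd by simp
    then show "\<exists>x y z. ?b k = diag3 x y z" using comm_diag_distinct[OF d] by blast
  qed
  have "symgroup ?b n = D2"
    by (rule symgroup_D2[OF all]; rule bexI[OF _ j]; simp add: hd d)
  then have "symgroup a n = act2 h ` D2" using symgroup_transport[OF h, of a n] by simp
  then show ?thesis by (rule conj_SO3I[OF h])
next
  case False
  then have sq0: "\<forall>j\<in>{1..n}. tcross (a j) (a j ** a j) = 0" by blast
  from False nz obtain i j where i: "i \<in> {1..n}" and j: "j \<in> {1..n}" and tij: "tcross (a i) (a j) \<noteq> 0"
    by blast
  have si: "transpose (a i) = a i" using sym i by blast
  obtain h d1 d2 d3 where h: "rotation_matrix h" and hd: "act2 (transpose h) (a i) = diag3 d1 d2 d3"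
    using diagonalize[OF si] by blast
  have HT: "rotation_matrix (transpose h)" using rot_transpose[OF h] .
  have "tcross (act2 (transpose h) (a i)) (act2 (transpose h) (a i ** a i)) = 0"
    using sq0 i tcross_act2[OF HT] by blast
  then have "tcross (diag3 d1 d2 d3) (diag3 d1 d2 d3 ** diag3 d1 d2 d3) = 0"
    using hd act2_mul[OF HT] by simp
  then have rep: "d1 = d2 \<or> d2 = d3 \<or> d1 = d3" using tcross_diag_sq by blast
  have ns: "\<not> (d1 = d2 \<and> d2 = d3)"
  proof
    assume "d1 = d2 \<and> d2 = d3"
    then obtain c where "diag3 d1 d2 d3 = c *\<^sub>R mat 1" using scalar_diag by blast
    then have "tcross (act2 (transpose h) (a i)) (act2 (transpose h) (a j)) = 0" using hd tcross_scalar by simp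
    then have "tcross (a i) (a j) = 0" using tcross_act2[OF HT] by blast
    then show False using tij by simp
  qed
  obtain P al ga where P: "rotation_matrix P" and ag: "al \<noteq> ga"
      and Pd: "act2 (transpose P) (diag3 d1 d2 d3) = diag3 al al ga"
    using normalize_rep[OF rep ns] by blast
  define H1 where "H1 = h ** P"
  have H1: "rotation_matrix H1" unfolding H1_def using rot_mul[OF h P] .
  have H1T: "rotation_matrix (transpose H1)" using rot_transpose[OF H1] .
  have H1i: "act2 (transpose H1) (a i) = diag3 al al ga" unfolding H1_def using Pd hd act2_rot_comp by metis
  let ?b = "\<lambda>k. act2 (transpose H1) (a k)"
  have symb: "transpose (?b k) = ?b k" if "k \<in> {1..n}" for k using sym that sym_act2 by blast
  have blk: "(?b k)$1$3 = 0 \<and> (?b k)$2$3 = 0" if k: "k \<in> {1..n}" for k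
  proof -
    have "?b i ** ?b k = ?b k ** ?b i" using comm i k comm_act2[OF H1T] by blast
    then have "diag3 al al ga ** ?b k = ?b k ** diag3 al al ga" using H1i by simp
    then show ?thesis using comm_aag[OF symb[OF k] ag] by blast
  qed
  obtain t where t: "act2 (transpose (rotz t)) (?b j) = diag3 ((act2 (transpose (rotz t)) (?b j))$1$1) ((act2 (transpose (rotz t)) (?b j))$2$2) ((?b j)$3$3)"
    using block_rotz[OF symb[OF j]] blk[OF j] by blast
  define p where "p = (act2 (transpose (rotz t)) (?b j))$1$1"
  define q where "q = (act2 (transpose (rotz t)) (?b j))$2$2"
  define r where "r = (?b j)$3$3"
  define H2 where "H2 = H1 ** rotz t"
  have H2: "rotation_matrix H2" unfolding H2_def using rot_mul[OF H1 rotz_rot] .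
  have H2T: "rotation_matrix (transpose H2)" using rot_transpose[OF H2] .
  let ?c = "\<lambda>k. act2 (transpose H2) (a k)"
  have cb: "?c k = act2 (transpose (rotz t)) (?b k)" for k unfolding H2_def by (rule act2_rot_comp)
  have ci: "?c i = diag3 al al ga" using cb[of i] H1i rotz_aag by simp
  have cj: "?c j = diag3 p q r" using cb[of j] t unfolding p_def q_def r_def by simp
  have pq: "p \<noteq> q"
  proof
    assume "p = q"
    then have "tcross (?c i) (?c j) = 0" unfolding ci cj tcross_diag KK_aag by simp
    then have "tcross (a i) (a j) = 0" using tcross_act2[OF H2T] by blast
    then show False using tij by simp
  qed
  have all: "\<forall>k\<in>{1..n}. \<exists>x y z. ?c k = diag3 x y z"
  proof
    fix k assume k: "k \<in> {1..n}"
    have sc: "transpose (?c k) = ?c k" using sym k sym_act2 by blast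
    have "?c i ** ?c k = ?c k ** ?c i" using comm i k comm_act2[OF H2T] by blast
    then have c1: "(?c k)$1$3 = 0" "(?c k)$2$3 = 0" using comm_aag[OF sc ag] ci by simp_all
    have "?c j ** ?c k = ?c k ** ?c j" using comm j k comm_act2[OF H2T] by blast
    then have c2: "(?c k)$1$2 = 0" "(?c k)$2$1 = 0" using comm_pq[OF pq] cj by simp_all
    have "?c k = diag3 ((?c k)$1$1) ((?c k)$2$2) ((?c k)$3$3)"
      unfolding mat3_eq using c1 c2 symE3[OF sc] by simp
    then show "\<exists>x y z. ?c k = diag3 x y z" by blast
  qed
  have s12: "\<exists>k\<in>{1..n}. (?c k)$1$1 \<noteq> (?c k)$2$2" by (rule bexI[OF _ j]) (simp add: cj pq)
  have s13: "\<exists>k\<in>{1..n}. (?c k)$1$1 \<noteq> (?c k)$3$3" by (rule bexI[OF _ i]) (simp add: ci ag)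
  have s23: "\<exists>k\<in>{1..n}. (?c k)$2$2 \<noteq> (?c k)$3$3" by (rule bexI[OF _ i]) (simp add: ci ag)
  have "symgroup ?c n = D2" by (rule symgroup_D2[OF all s12 s13 s23])
  then have "symgroup a n = act2 H2 ` D2" using symgroup_transport[OF H2, of a n] by simp
  then show ?thesis by (rule conj_SO3I[OF H2])
qed

lemma cross_e3: "cross3 y (axis 3 1) = 0 \<Longrightarrow> y$1 = 0 \<and> y$2 = (0::real)"
  by (simp add: cross3_def vec_eq_iff forall_3)

lemma C4_Z2:
  assumes sym: "\<forall>k\<in>{1..n}. transpose (a k) = a k" and i: "i \<in> {1..n}" and j: "j \<in> {1..n}"
    and w0: "ttr (tcross (a i) (a j)) \<noteq> 0"
    and cr: "\<forall>k\<in>{1..n}. cross3 (a k *v ttr (tcross (a i) (a j))) (ttr (tcross (a i) (a j))) = 0"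
  shows "conj_SO3 (symgroup a n) Z2"
proof -
  define w where "w = ttr (tcross (a i) (a j))"
  define u where "u = (1 / norm w) *\<^sub>R w"
  have nu: "norm u = 1" unfolding u_def using w0 w_def by simp
  have cu: "cross3 (a k *v u) u = 0" if k: "k \<in> {1..n}" for k
  proof -
    have "cross3 (a k *v u) u = ((1 / norm w) * (1 / norm w)) *\<^sub>R cross3 (a k *v w) w"
      unfolding u_def by (simp add: matrix_vector_mult_scaleR cross_mult_left cross_mult_right)
    then show ?thesis using cr k unfolding w_def by simp
  qed
  obtain h where h: "rotation_matrix h" and hu: "h *v axis 3 1 = u"
    using rotation_matrix_exists_basis[of u 3] nu by auto
  have HT: "rotation_matrix (transpose h)" using rot_transpose[OF h] .
  let ?b = "\<lambda>k. act2 (transpose h) (a k)"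
  have tu: "transpose h *v u = axis 3 1" using rot_vec_inv(2)[OF h] hu by metis
  have blk: "\<forall>k\<in>{1..n}. transpose (?b k) = ?b k \<and> (?b k)$1$3 = 0 \<and> (?b k)$2$3 = 0"
  proof
    fix k assume k: "k \<in> {1..n}"
    have sb: "transpose (?b k) = ?b k" using sym k sym_act2 by blast
    have "?b k *v axis 3 1 = (transpose h ** a k) *v (h *v axis 3 1)"
      by (simp add: act2_def matrix_vector_mul_assoc del: transpose_matrix_vector)
    also have "\<dots> = transpose h *v (a k *v u)"
      using hu by (simp add: matrix_vector_mul_assoc del: transpose_matrix_vector)
    finally have bv: "?b k *v axis 3 1 = transpose h *v (a k *v u)" .
    have "cross3 (?b k *v axis 3 1) (axis 3 1) = cross3 (transpose h *v (a k *v u)) (transpose h *v u)"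
      using bv tu by simp
    also have "\<dots> = transpose h *v cross3 (a k *v u) u"
      using cross_rotation_matrix[OF HT] by (simp del: transpose_matrix_vector)
    also have "\<dots> = 0" using cu[OF k] by simp
    finally have "(?b k *v axis 3 1)$1 = 0 \<and> (?b k *v axis 3 1)$2 = 0" using cross_e3 by blast
    then have "(?b k)$1$3 = 0 \<and> (?b k)$2$3 = 0" by (simp add: mv_entry)
    then show "transpose (?b k) = ?b k \<and> (?b k)$1$3 = 0 \<and> (?b k)$2$3 = 0" using sb by simp
  qed
  have si: "transpose (a i) = a i" and sj: "transpose (a j) = a j" using sym i j by auto
  have "a i ** a j \<noteq> a j ** a i" using w0 ttr_zero_iff[OF si sj] by simp
  then have nc: "?b i ** ?b j \<noteq> ?b j ** ?b i" using comm_act2[OF HT] by blast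
  have "symgroup ?b n = Z2" by (rule symgroup_Z2[OF blk i j nc])
  then have "symgroup a n = act2 h ` Z2" using symgroup_transport[OF h, of a n] by simp
  then show ?thesis by (rule conj_SO3I[OF h])
qed

lemma zero_mm: "(0::real^3^3) ** B = 0"
  by (simp add: matrix_matrix_mult_def vec_eq_iff)

lemma fix3:
  fixes g :: "real^3^3"
  assumes g: "rotation_matrix g" and gp: "g *v p = p" and gq: "g *v q = q" and pq: "cross3 p q \<noteq> 0"
  shows "g = mat 1"
proof -
  define r where "r = cross3 p q"
  have gr: "g *v r = r" unfolding r_def using cross_rotation_matrix[OF g, of p q] gp gq by simp
  define V :: "real^3^3" where "V = vector [p, q, r]"
  have "det V = p \<bullet> cross3 q r" unfolding V_def by (simp add: dot_cross_det)
  also have "\<dots> = r \<bullet> r" unfolding r_def by (simp add: cross3_simps)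
  finally have "det V \<noteq> 0" using pq r_def by simp
  then have "det (transpose V) \<noteq> 0" by (simp add: det_transpose)
  then obtain B where PB: "transpose V ** B = mat 1" using invertible_det_nz invertible_right_inverse by blast
  define M where "M = g - mat 1"
  have Mv: "M *v v = 0" if "g *v v = v" for v
    unfolding M_def using that by (simp add: matrix_vector_mult_diff_rdistrib)
  have V123: "V$1 = p" "V$2 = q" "V$3 = r" unfolding V_def by simp_all
  have c: "(M ** transpose V)$x$y = (M *v (V$y))$x" for x y
    by (simp add: matrix_matrix_mult_def matrix_vector_mult_def transpose_def mult.commute)
  have "M *v (V$y) = 0" for y
    using exhaust_3[of y] V123 Mv[OF gp] Mv[OF gq] Mv[OF gr] by (elim disjE) simp_all
  then have MV: "M ** transpose V = 0" by (simp add: vec_eq_iff c)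
  have "M = M ** (transpose V ** B)" by (simp add: PB)
  also have "\<dots> = (M ** transpose V) ** B" by (simp add: matrix_mul_assoc)
  also have "\<dots> = 0" by (simp add: MV zero_mm)
  finally have "M = 0" .
  then show ?thesis unfolding M_def by simp
qed

lemma mv_neg: "(A::real^3^3) *v (- v) = - (A *v v)"
  by (simp add: vec_eq_iff mv_entry forall_3)

lemma fix_omega:
  fixes g a b :: "real^3^3"
  assumes g: "rotation_matrix g" and sa: "transpose a = a" and sb: "transpose b = b"
    and ga: "g ** a = a ** g" and gb: "g ** b = b ** g"
  shows "g *v ttr (tcross a b) = ttr (tcross a b)"
proof -
  define w where "w = ttr (tcross a b)"
  define W where "W = a ** b - b ** a"
  have gW: "g ** W ** transpose g = W"
  proof -
    have "g ** W = W ** g" unfolding W_def using comm_sub[OF ga gb] .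
    then have "g ** W ** transpose g = W ** (g ** transpose g)" by (simp add: matrix_mul_assoc)
    then show ?thesis using rotD[OF g] by simp
  qed
  have "cross3 (g *v w - w) x = 0" for x
  proof -
    have "cross3 (g *v w) x = cross3 (g *v w) (g *v (transpose g *v x))"
      using rot_vec_inv(1)[OF g] by simp
    also have "\<dots> = g *v cross3 w (transpose g *v x)" by (rule cross_rotation_matrix[OF g])
    also have "\<dots> = g *v ((-(1/3)) *\<^sub>R (W *v (transpose g *v x)))"
      unfolding w_def W_def using ttr_cross[OF sa sb] by simp
    also have "\<dots> = (-(1/3)) *\<^sub>R ((g ** W ** transpose g) *v x)"
      by (simp add: matrix_vector_mult_scaleR matrix_vector_mul_assoc matrix_mul_assoc mv_neg del: transpose_matrix_vector)
    also have "\<dots> = (-(1/3)) *\<^sub>R (W *v x)" by (simp only: gW)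
    also have "\<dots> = cross3 w x" unfolding w_def W_def using ttr_cross[OF sa sb] by simp
    finally have "cross3 (g *v w) x - cross3 w x = 0" by simp
    moreover have "cross3 (g *v w - w) x = cross3 (g *v w) x - cross3 w x"
      by (simp add: cross3_def vec_eq_iff forall_3 algebra_simps)
    ultimately show ?thesis by simp
  qed
  then have "g *v w - w = 0" by (rule cross_all_zero)
  then show ?thesis unfolding w_def by simp
qed


lemma C1_SO3:
  assumes c1: "\<forall>k\<in>{1..n}. dev (a k) = 0"
  shows "symgroup a n = SO3"
proof (intro equalityI subsetI)
  fix g assume "g \<in> symgroup a n" then show "g \<in> SO3" unfolding symgroup_def by auto
next
  fix g assume g: "g \<in> SO3"
  show "g \<in> symgroup a n" unfolding symgroup_def
  proof (intro CollectI conjI ballI)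
    show "g \<in> SO3" by (rule g)
    fix k assume k: "k \<in> {1..n}"
    then obtain c where "a k = c *\<^sub>R mat 1" using c1 dev_zero_iff by blast
    then show "act2 g (a k) = a k" using act2_scalar g SO3_rot by simp
  qed
qed

lemma none_trivial:
  assumes sym: "\<forall>k\<in>{1..n}. transpose (a k) = a k"
    and n1: "\<not> (\<forall>k\<in>{1..n}. dev (a k) = 0)"
    and n2: "\<not> (\<exists>j\<in>{1..n}. dev (a j) \<noteq> 0 \<and> tcross (a j) (a j ** a j) = 0
           \<and> (\<forall>k\<in>{1..n}. tcross (a j) (a k) = 0))"
    and n3: "\<not> ((\<forall>k\<in>{1..n}. \<forall>l\<in>{1..n}. ttr (tcross (a k) (a l)) = 0)
        \<and> ((\<exists>j\<in>{1..n}. tcross (a j) (a j ** a j) \<noteq> 0)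
           \<or> (\<exists>i\<in>{1..n}. \<exists>j\<in>{1..n}. tcross (a i) (a j) \<noteq> 0)))"
    and n4: "\<not> (\<exists>i\<in>{1..n}. \<exists>j\<in>{1..n}. ttr (tcross (a i) (a j)) \<noteq> 0
           \<and> (\<forall>k\<in>{1..n}. cross3 (a k *v ttr (tcross (a i) (a j))) (ttr (tcross (a i) (a j))) = 0))"
  shows "symgroup a n = {mat 1}"
proof -
  have ex: "\<exists>i\<in>{1..n}. \<exists>j\<in>{1..n}. ttr (tcross (a i) (a j)) \<noteq> 0"
  proof (rule ccontr)
    assume "\<not> ?thesis"
    then have t0: "\<forall>k\<in>{1..n}. \<forall>l\<in>{1..n}. ttr (tcross (a k) (a l)) = 0" by blast
    then have z: "\<forall>j\<in>{1..n}. tcross (a j) (a j ** a j) = 0" "\<forall>i\<in>{1..n}. \<forall>j\<in>{1..n}. tcross (a i) (a j) = 0"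
      using n3 by blast+
    obtain j where j: "j \<in> {1..n}" "dev (a j) \<noteq> 0" using n1 by blast
    then show False using n2 z by blast
  qed
  then obtain i j where i: "i \<in> {1..n}" and j: "j \<in> {1..n}" and w0: "ttr (tcross (a i) (a j)) \<noteq> 0" by blast
  define w where "w = ttr (tcross (a i) (a j))"
  obtain k where k: "k \<in> {1..n}" and ck: "cross3 (a k *v w) w \<noteq> 0" using n4 i j w0 unfolding w_def by blast
  have si: "transpose (a i) = a i" and sj: "transpose (a j) = a j" using sym i j by auto
  show ?thesis
  proof (intro equalityI subsetI)
    fix g assume gs: "g \<in> symgroup a n"
    then have g: "rotation_matrix g" unfolding symgroup_def SO3_rot by auto
    have cm: "g ** a l = a l ** g" if "l \<in> {1..n}" for l
      using gs that fix_iff_comm[OF g] unfolding symgroup_def by auto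
    have gw: "g *v w = w" unfolding w_def by (rule fix_omega[OF g si sj cm[OF i] cm[OF j]])
    have gk: "g *v (a k *v w) = a k *v w"
      using cm[OF k] gw by (metis matrix_vector_mul_assoc)
    have "g = mat 1" by (rule fix3[OF g gk gw ck])
    then show "g \<in> {mat 1}" by simp
  next
    fix g assume "g \<in> {mat 1 :: real^3^3}"
    then show "g \<in> symgroup a n" unfolding symgroup_def SO3_rot using rot_id by simp
  qed
qed

lemma cls_ne: "SO3 \<noteq> O2" "SO3 \<noteq> D2" "SO3 \<noteq> Z2" "SO3 \<noteq> {mat 1}"
  "O2 \<noteq> D2" "O2 \<noteq> Z2" "O2 \<noteq> {mat 1}" "D2 \<noteq> Z2" "D2 \<noteq> {mat 1}" "Z2 \<noteq> {mat 1}"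
proof -
  show "SO3 \<noteq> O2" using O2_ne_SO3 by metis
  show "SO3 \<noteq> D2" using SO3_ne by metis
  show "SO3 \<noteq> Z2" using SO3_ne by metis
  show "SO3 \<noteq> {mat 1}" using SO3_ne by metis
  show "O2 \<noteq> D2" using O2_sq D2_sq by metis
  show "O2 \<noteq> Z2" using O2_sq Z2_sq by metis
  show "O2 \<noteq> {mat 1}" using O2_sq I_sq by metis
  have c1: "card {mat 1 :: real^3^3} = 1" by simp
  show "D2 \<noteq> Z2" using card_D2 card_Z2 by auto
  show "D2 \<noteq> {mat 1}"
  proof
    assume "D2 = {mat 1}" then have "card D2 = 1" using c1 by simp
    then show False using card_D2 by simp
  qed
  show "Z2 \<noteq> {mat 1}"
  proof
    assume "Z2 = {mat 1}" then have "card Z2 = 1" using c1 by simp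
    then show False using card_Z2 by simp
  qed
qed

theorem theorem8p6:
  fixes a :: "nat \<Rightarrow> real^3^3" and n :: nat
  assumes sym: "\<forall>k\<in>{1..n}. transpose (a k) = a k"
  shows "(isotropic a n \<longleftrightarrow> (\<forall>k\<in>{1..n}. dev (a k) = 0))
   \<and> (transversely_isotropic a n \<longleftrightarrow>
        (\<exists>j\<in>{1..n}. dev (a j) \<noteq> 0 \<and> tcross (a j) (a j ** a j) = 0
           \<and> (\<forall>k\<in>{1..n}. tcross (a j) (a k) = 0)))
   \<and> (orthotropic a n \<longleftrightarrow>
        (\<forall>k\<in>{1..n}. \<forall>l\<in>{1..n}. ttr (tcross (a k) (a l)) = 0)
        \<and> ((\<exists>j\<in>{1..n}. tcross (a j) (a j ** a j) \<noteq> 0)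
           \<or> (\<exists>i\<in>{1..n}. \<exists>j\<in>{1..n}. tcross (a i) (a j) \<noteq> 0)))
   \<and> (monoclinic a n \<longleftrightarrow>
        (\<exists>i\<in>{1..n}. \<exists>j\<in>{1..n}. ttr (tcross (a i) (a j)) \<noteq> 0
           \<and> (\<forall>k\<in>{1..n}. cross3 (a k *v ttr (tcross (a i) (a j))) (ttr (tcross (a i) (a j))) = 0)))"
proof -
  let ?G = "symgroup a n"
  define C1 where "C1 = (\<forall>k\<in>{1..n}. dev (a k) = 0)"
  define C2 where "C2 = (\<exists>j\<in>{1..n}. dev (a j) \<noteq> 0 \<and> tcross (a j) (a j ** a j) = 0
           \<and> (\<forall>k\<in>{1..n}. tcross (a j) (a k) = 0))"
  define C3 where "C3 = ((\<forall>k\<in>{1..n}. \<forall>l\<in>{1..n}. ttr (tcross (a k) (a l)) = 0)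
        \<and> ((\<exists>j\<in>{1..n}. tcross (a j) (a j ** a j) \<noteq> 0)
           \<or> (\<exists>i\<in>{1..n}. \<exists>j\<in>{1..n}. tcross (a i) (a j) \<noteq> 0)))"
  define C4 where "C4 = (\<exists>i\<in>{1..n}. \<exists>j\<in>{1..n}. ttr (tcross (a i) (a j)) \<noteq> 0
           \<and> (\<forall>k\<in>{1..n}. cross3 (a k *v ttr (tcross (a i) (a j))) (ttr (tcross (a i) (a j))) = 0))"
  have k1: "conj_SO3 ?G SO3" if "C1" using C1_SO3[of n a] that conj_refl unfolding C1_def by simp
  have k2: "conj_SO3 ?G O2" if "C2" using that C2_O2[OF sym] unfolding C2_def by blast
  have k3: "conj_SO3 ?G D2" if "C3"
  proof -
    have comm: "\<forall>k\<in>{1..n}. \<forall>l\<in>{1..n}. a k ** a l = a l ** a k"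
      using that sym ttr_zero_iff unfolding C3_def by blast
    show ?thesis using that C3_D2[OF sym comm] unfolding C3_def by blast
  qed
  have k4: "conj_SO3 ?G Z2" if "C4" using that C4_Z2[OF sym] unfolding C4_def by blast
  have k5: "conj_SO3 ?G {mat 1}" if "\<not> C1" "\<not> C2" "\<not> C3" "\<not> C4"
  proof -
    have "?G = {mat 1}"
      by (rule none_trivial[OF sym that(1)[unfolded C1_def] that(2)[unfolded C2_def]
          that(3)[unfolded C3_def] that(4)[unfolded C4_def]])
    then show ?thesis using conj_refl by simp
  qed
  have U: "X = Y" if "conj_SO3 ?G X" "conj_SO3 ?G Y" "X \<in> {SO3, O2, D2, Z2, {mat 1}}" "Y \<in> {SO3, O2, D2, Z2, {mat 1}}" for X Y
    using classes_distinct that by blast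
  have main: "(X = SO3 \<longrightarrow> C1) \<and> (X = O2 \<longrightarrow> C2) \<and> (X = D2 \<longrightarrow> C3) \<and> (X = Z2 \<longrightarrow> C4)"
    if X: "conj_SO3 ?G X" "X \<in> {SO3, O2, D2, Z2, {mat 1}}" for X
  proof (cases C1)
    case True
    then have "X = SO3" using U[OF X(1) k1] X(2) by simp
    then show ?thesis using True cls_ne by auto
  next
    case n1: False
    show ?thesis
    proof (cases C2)
      case True
      then have "X = O2" using U[OF X(1) k2] X(2) by simp
      then show ?thesis using True cls_ne by auto
    next
      case n2: False
      show ?thesis
      proof (cases C3)
        case True
        then have "X = D2" using U[OF X(1) k3] X(2) by simp
        then show ?thesis using True cls_ne by auto
      next
        case n3: False
        show ?thesis
        proof (cases C4)
          case True
          then have "X = Z2" using U[OF X(1) k4] X(2) by simp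
          then show ?thesis using True cls_ne by auto
        next
          case n4: False
          have "X = {mat 1}" using U[OF X(1) k5[OF n1 n2 n3 n4]] X(2) by simp
          then show ?thesis using cls_ne by auto
        qed
      qed
    qed
  qed
  have r1: "isotropic a n \<longleftrightarrow> C1"
    unfolding isotropic_def using main[of SO3] k1 by auto
  have r2: "transversely_isotropic a n \<longleftrightarrow> C2"
    unfolding transversely_isotropic_def using main[of O2] k2 by auto
  have r3: "orthotropic a n \<longleftrightarrow> C3"
    unfolding orthotropic_def using main[of D2] k3 by auto
  have r4: "monoclinic a n \<longleftrightarrow> C4"
    unfolding monoclinic_def using main[of Z2] k4 by auto
  show ?thesis using r1 r2 r3 r4 unfolding C1_def C2_def C3_def C4_def by blast
qed


end
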